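(* Let $\mathbf N^{(1,0,0)}=E^{(1,0,0)}\mathbf B^{(1,0,0)}$, $\mathbf N^{(0,1,0)}=E^{(0,1,0)}\mathbf B^{(0,1,0)}$, $\mathbf N^{(0,0,1)}=E^{(0,0,1)}\mathbf B^{(0,0,1)}$ be the collections of $n_1$ functions on $\Omega=[0,R]\times[0,S]\times[0,T]$ defined in the context. Then the non-zero functions in $\mathbf N^{(1,0,0)}$ are linearly independent, and likewise the non-zero functions in $\mathbf N^{(0,1,0)}$, and those in $\mathbf N^{(0,0,1)}$.
   Context: Univariate splines. For a degree $p\ge1$ and an open knot vector $\mathbf t=(t_1,\dots,t_{m+p+1})$ with B-splines $B^p_1,\dots,B^p_m$ spanning a $C^1$ space, define $D^p_j=\frac{p}{t_{j+p+1}-t_{j+1}}B^{p-1}_{j+1}$, $j=1,\dots,m-1$ ($B^{p-1}$ the degree $p-1$ B-splines on $(t_2,\dots,t_{m+p})$). Periodic version: with $(c_1,c_2)=\frac{(t_{m+p+1}-t_m,\,t_{p+2}-t_1)}{t_{m+p+1}-t_m+t_{p+2}-t_1}$, $H^{(0)}=[\mathbf c|I_{m-2}|\mathbf c]$, $\mathbf c=(c_1,0,\dots,0,c_2)^T$, and $H^{(1)}$ the $(m-2)\times(m-1)$ matrix with first $m-3$ rows $[0|I_{m-3}|0]$ and last row $(c_2,0,\dots,0,c_1)$, the periodic basis is $H^{(0)}(B^p_1,\dots,B^p_m)^T$ and the periodic derivative functions are $H^{(1)}(D^p_1,\dots,D^p_{m-1})^T$. Let $\mathbb S^{p^r}$ (on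 $[0,R]$) and $\mathbb S^{p^t}$ (on $[0,T]$) be $C^1$ periodic spaces of this kind with bases $B^{p^r}_1,\dots,B^{p^r}_{n^r}$, $B^{p^t}_1,\dots,B^{p^t}_{n^t}$ and periodic derivative functions $D^{p^r}_1,\dots,D^{p^r}_{n^r}$, $D^{p^t}_1,\dots,D^{p^t}_{n^t}$; let $\mathbb S^{p^s}$ on $[0,S]$ be a non-periodic $C^1$ spline space with B-splines $B^{p^s}_1,\dots,B^{p^s}_{n^s}$ and $D^{p^s}_1,\dots,D^{p^s}_{n^s-1}$. Vectorizations (index $i$ fastest, then $j$, then $k$): $\mathbf B^{(1,0,0)}=(D^{p^r}_iB^{p^s}_jB^{p^t}_k)_{i\le n^r,j\le n^s,k\le n^t}$, $\mathbf B^{(0,1,0)}=(B^{p^r}_iD^{p^s}_jB^{p^t}_k)_{i\le n^r,j\le n^s-1,k\le n^t}$, $\mathbf B^{(0,0,1)}=(B^{p^r}_iB^{p^s}_jD^{p^t}_k)_{i\le n^r,j\le n^s,k\le n^t}$. Matrices. $\bar n_0=n^r(n^s-2)+3$, $\bar n_1=2n^r(n^s-2)+2$, $n_1=n^t(\bar n_0+\bar n_1)$, $\theta_i=2\pi+\frac{(1-2i)\pi}{n^r}$. $\bar E$ is $3\times2n^r$ with columns $(1,1),\dots,(n^r,1),(1,2),\dots,(n^r,2)$, $\bar E_{\ell,(i,1)}=\frac13$, $\bar E_{1,(i,2)}=\frac13+\frac13\cos\theta_i$, $\bar E_{2,(i,2)}=\frac13-\frac16\cos\theta_i+\frac{\sqrt3}6\sin\theta_i$,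 $\bar E_{3,(i,2)}=\frac13-\frac16\cos\theta_i-\frac{\sqrt3}6\sin\theta_i$, $\bar E_{\ell,(n^r+1,2)}:=\bar E_{\ell,(1,2)}$. $E^{(0)}=\begin{bmatrix}\bar E&0\\0&I_{n^r(n^s-2)}\end{bmatrix}$ ($\bar n_0\times n^rn^s$). $E^{(1,0)}$ ($\bar n_1\times n^rn^s$): $y=E^{(1,0)}x$ has $y_\ell=\sum_{i=1}^{n^r}(\bar E_{\ell+1,(i+1,2)}-\bar E_{\ell+1,(i,2)})x_{i+n^r}$ ($\ell=1,2$) and, for $j=3,\dots,n^s$, $i=1,\dots,n^r$, $y_{2+i+(2j-6)n^r}=0$, $y_{2+i+(2j-5)n^r}=x_{i+(j-1)n^r}$. $E^{(0,1)}$ ($\bar n_1\times n^r(n^s-1)$): $y=E^{(0,1)}x$ has $y_\ell=\sum_{i=1}^{n^r}(\bar E_{\ell+1,(i,2)}-\bar E_{\ell+1,(i,1)})x_i$ ($\ell=1,2$) and, for $j=2,\dots,n^s-1$, $i=1,\dots,n^r$, $y_{2+i+(2j-4)n^r}=x_{i+(j-1)n^r}$, $y_{2+i+(2j-3)n^r}=0$. With $[A;B]$ vertical stacking: $E^{(1,0,0)}=I_{n^t}\otimes[E^{(1,0)};0_{\bar n_0\times n^rn^s}]$, $E^{(0,1,0)}=I_{n^t}\otimes[E^{(0,1)};0_{\bar n_0\times n^r(n^s-1)}]$, $E^{(0,0,1)}=I_{n^t}\otimes[0_{\bar n_1\times n^rn^s};E^{(0)}]$. *)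

theory Defs
  imports Complex_Main
begin

definition kn :: "real list \<Rightarrow> nat \<Rightarrow> real" where
  "kn t i = t ! (i - 1)"

text \<open>Degree-0 B-splines are indicators of [t_j, t_(j+1)); the last non-empty interval is
  closed at the right end of the knot vector (standard convention). Higher degrees via
  the Cox--de Boor recursion, with the convention 0/0 = 0 (Isabelle's x / 0 = 0).\<close>
fun bspl :: "real list \<Rightarrow> nat \<Rightarrow> nat \<Rightarrow> real \<Rightarrow> real" where
  "bspl t 0 j x =
     (if (kn t j \<le> x \<and> x < kn t (j+1)) \<or>
         (kn t j < kn t (j+1) \<and> x = kn t (j+1) \<and> x = last t) then 1 else 0)"
| "bspl t (Suc p) j x =
     (x - kn t j) / (kn t (j+p+1) - kn t j) * bspl t p j x
     + (kn t (j+p+2) - x) / (kn t (j+p+2) - kn t (j+1)) * bspl t p (j+1) x"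

text \<open>D^p_j = p/(t_(j+p+1) - t_(j+1)) B^(p-1)_(j+1), where B^(p-1)_(j+1) is the degree p-1
  B-spline on the knots t_(j+1), ..., t_(j+p+1) (these are the knots of (t_2, ..., t_(m+p))).\<close>
definition dspl :: "real list \<Rightarrow> nat \<Rightarrow> nat \<Rightarrow> real \<Rightarrow> real" where
  "dspl t p j x = real p / (kn t (j+p+1) - kn t (j+1)) * bspl t (p - 1) (j+1) x"

definition knot_mult :: "real list \<Rightarrow> real \<Rightarrow> nat" where
  "knot_mult t y = card {k \<in> {1..length t}. kn t k = y}"

text \<open>Open knot vector of degree p with m B-splines on [a,b], spanning a C^1 space
  (interior knots have multiplicity at most p-1).\<close>
definition open_C1_knots :: "real list \<Rightarrow> nat \<Rightarrow> nat \<Rightarrow> real \<Rightarrow> real \<Rightarrow> bool" where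
  "open_C1_knots t p m a b \<longleftrightarrow>
     1 \<le> p \<and> length t = m + p + 1 \<and> sorted t \<and> a < b \<and>
     (\<forall>i\<in>{1..p+1}. kn t i = a) \<and> (\<forall>i\<in>{m+1..m+p+1}. kn t i = b) \<and>
     (\<forall>i\<in>{p+2..m}. knot_mult t (kn t i) \<le> p - 1)"

definition per_c1 :: "real list \<Rightarrow> nat \<Rightarrow> nat \<Rightarrow> real" where
  "per_c1 t p m = (kn t (m+p+1) - kn t m) /
     (kn t (m+p+1) - kn t m + kn t (p+2) - kn t 1)"

definition per_c2 :: "real list \<Rightarrow> nat \<Rightarrow> nat \<Rightarrow> real" where
  "per_c2 t p m = (kn t (p+2) - kn t 1) /
     (kn t (m+p+1) - kn t m + kn t (p+2) - kn t 1)"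

definition per_cvec :: "real list \<Rightarrow> nat \<Rightarrow> nat \<Rightarrow> nat \<Rightarrow> real" where
  "per_cvec t p m i = (if i = 1 then per_c1 t p m else if i = m - 2 then per_c2 t p m else 0)"

definition H0 :: "real list \<Rightarrow> nat \<Rightarrow> nat \<Rightarrow> nat \<Rightarrow> nat \<Rightarrow> real" where
  "H0 t p m i l = (if l = 1 \<or> l = m then per_cvec t p m i else if l = i + 1 then 1 else 0)"

definition H1 :: "real list \<Rightarrow> nat \<Rightarrow> nat \<Rightarrow> nat \<Rightarrow> nat \<Rightarrow> real" where
  "H1 t p m i l =
     (if i = m - 2 then (if l = 1 then per_c2 t p m else if l = m - 1 then per_c1 t p m else 0)
      else if l = i + 1 then 1 else 0)"

definition per_B :: "real list \<Rightarrow> nat \<Rightarrow> nat \<Rightarrow> nat \<Rightarrow> real \<Rightarrow> real" where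
  "per_B t p m i x = (\<Sum>l = 1..m. H0 t p m i l * bspl t p l x)"

definition per_D :: "real list \<Rightarrow> nat \<Rightarrow> nat \<Rightarrow> nat \<Rightarrow> real \<Rightarrow> real" where
  "per_D t p m i x = (\<Sum>l = 1..m-1. H1 t p m i l * dspl t p l x)"

definition idm :: "nat \<Rightarrow> nat \<Rightarrow> real" where
  "idm a b = (if a = b then 1 else 0)"

definition kron :: "nat \<Rightarrow> nat \<Rightarrow> (nat \<Rightarrow> nat \<Rightarrow> real) \<Rightarrow> (nat \<Rightarrow> nat \<Rightarrow> real) \<Rightarrow> nat \<Rightarrow> nat \<Rightarrow> real" where
  "kron rB cB A B a b =
     A ((a - 1) div rB + 1) ((b - 1) div cB + 1) * B ((a - 1) mod rB + 1) ((b - 1) mod cB + 1)"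

definition vstack :: "nat \<Rightarrow> (nat \<Rightarrow> nat \<Rightarrow> real) \<Rightarrow> (nat \<Rightarrow> nat \<Rightarrow> real) \<Rightarrow> nat \<Rightarrow> nat \<Rightarrow> real" where
  "vstack rA A B a b = (if a \<le> rA then A a b else B (a - rA) b)"

definition zerom :: "nat \<Rightarrow> nat \<Rightarrow> real" where
  "zerom a b = 0"

definition matfun :: "nat \<Rightarrow> (nat \<Rightarrow> nat \<Rightarrow> real) \<Rightarrow> (nat \<Rightarrow> 'x \<Rightarrow> real) \<Rightarrow> nat \<Rightarrow> 'x \<Rightarrow> real" where
  "matfun ncols M v a x = (\<Sum>b = 1..ncols. M a b * v b x)"

definition vec3 :: "nat \<Rightarrow> nat \<Rightarrow> (nat \<Rightarrow> nat \<Rightarrow> nat \<Rightarrow> 'y) \<Rightarrow> nat \<Rightarrow> 'y" where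
  "vec3 n1 n2 f a = f ((a - 1) mod n1 + 1) ((a - 1) div n1 mod n2 + 1) ((a - 1) div (n1 * n2) + 1)"

definition theta :: "nat \<Rightarrow> nat \<Rightarrow> real" where
  "theta nr i = 2 * pi + (1 - 2 * real i) * pi / real nr"

definition Ebar_e :: "nat \<Rightarrow> nat \<Rightarrow> nat \<Rightarrow> nat \<Rightarrow> real" where
  "Ebar_e nr l i s =
     (let i' = (if i = nr + 1 then 1 else i); th = theta nr i' in
      if s = 1 then 1/3
      else if l = 1 then 1/3 + 1/3 * cos th
      else if l = 2 then 1/3 - 1/6 * cos th + sqrt 3 / 6 * sin th
      else 1/3 - 1/6 * cos th - sqrt 3 / 6 * sin th)"

definition Ebar :: "nat \<Rightarrow> nat \<Rightarrow> nat \<Rightarrow> real" where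
  "Ebar nr l c = (if c \<le> nr then Ebar_e nr l c 1 else Ebar_e nr l (c - nr) 2)"

definition nbar0 :: "nat \<Rightarrow> nat \<Rightarrow> nat" where
  "nbar0 nr ns = nr * (ns - 2) + 3"

definition nbar1 :: "nat \<Rightarrow> nat \<Rightarrow> nat" where
  "nbar1 nr ns = 2 * nr * (ns - 2) + 2"

definition E0 :: "nat \<Rightarrow> nat \<Rightarrow> nat \<Rightarrow> real" where
  "E0 nr a b =
     (if a \<le> 3 \<and> b \<le> 2 * nr then Ebar nr a b
      else if 3 < a \<and> 2 * nr < b then idm (a - 3) (b - 2 * nr) else 0)"

definition E10 :: "nat \<Rightarrow> nat \<Rightarrow> nat \<Rightarrow> nat \<Rightarrow> real" where
  "E10 nr ns a b =
     (if a \<in> {1, 2} then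
        (if nr < b \<and> b \<le> 2 * nr
         then Ebar_e nr (a + 1) (b - nr + 1) 2 - Ebar_e nr (a + 1) (b - nr) 2 else 0)
      else if (\<exists>j i. 3 \<le> j \<and> j \<le> ns \<and> 1 \<le> i \<and> i \<le> nr \<and>
                      a = 2 + i + (2 * j - 5) * nr \<and> b = i + (j - 1) * nr) then 1
      else 0)"

definition E01 :: "nat \<Rightarrow> nat \<Rightarrow> nat \<Rightarrow> nat \<Rightarrow> real" where
  "E01 nr ns a b =
     (if a \<in> {1, 2} then
        (if 1 \<le> b \<and> b \<le> nr then Ebar_e nr (a + 1) b 2 - Ebar_e nr (a + 1) b 1 else 0)
      else if (\<exists>j i. 2 \<le> j \<and> j \<le> ns - 1 \<and> 1 \<le> i \<and> i \<le> nr \<and>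
                      a = 2 + i + (2 * j - 4) * nr \<and> b = i + (j - 1) * nr) then 1
      else 0)"

definition E100 :: "nat \<Rightarrow> nat \<Rightarrow> nat \<Rightarrow> nat \<Rightarrow> real" where
  "E100 nr ns = kron (nbar1 nr ns + nbar0 nr ns) (nr * ns) idm
                  (vstack (nbar1 nr ns) (E10 nr ns) zerom)"

definition E010 :: "nat \<Rightarrow> nat \<Rightarrow> nat \<Rightarrow> nat \<Rightarrow> real" where
  "E010 nr ns = kron (nbar1 nr ns + nbar0 nr ns) (nr * (ns - 1)) idm
                  (vstack (nbar1 nr ns) (E01 nr ns) zerom)"

definition E001 :: "nat \<Rightarrow> nat \<Rightarrow> nat \<Rightarrow> nat \<Rightarrow> real" where
  "E001 nr ns = kron (nbar1 nr ns + nbar0 nr ns) (nr * ns) idm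
                  (vstack (nbar1 nr ns) zerom (E0 nr))"

definition nonzero_lin_indep :: "'x set \<Rightarrow> nat \<Rightarrow> (nat \<Rightarrow> 'x \<Rightarrow> real) \<Rightarrow> bool" where
  "nonzero_lin_indep \<Omega> n N \<longleftrightarrow>
     (let Z = {a \<in> {1..n}. \<exists>x\<in>\<Omega>. N a x \<noteq> 0} in
      \<forall>c :: nat \<Rightarrow> real. (\<forall>x\<in>\<Omega>. (\<Sum>a\<in>Z. c a * N a x) = 0) \<longrightarrow> (\<forall>a\<in>Z. c a = 0))"

end

theory Submission
  imports Defs "HOL-Library.Function_Algebras" "HOL-Computational_Algebra.Polynomial"
begin



lemma kn_mono:
  assumes "sorted t" "1 \<le> i" "i \<le> j" "j \<le> length t"
  shows "kn t i \<le> kn t j"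
  using assms by (simp add: kn_def sorted_nth_mono)

lemma bspl_supp:
  assumes st: "sorted t" and l1: "1 \<le> l" and lN: "l + 1 \<le> length t"
    and x1: "kn t l < x" and x2: "x < kn t (l+1)"
  shows "1 \<le> j \<Longrightarrow> j + q + 1 \<le> length t \<Longrightarrow> bspl t q j x \<noteq> 0 \<Longrightarrow> j \<le> l \<and> l \<le> j + q"
proof (induction q arbitrary: j)
  case 0
  have lastt: "last t = kn t (length t)"
    using lN by (cases t) (auto simp: kn_def last_conv_nth)
  have "kn t (l+1) \<le> kn t (length t)" using kn_mono[OF st, of "l+1" "length t"] lN by simp
  hence nl: "x \<noteq> last t" using x2 lastt by auto
  from 0 nl have A: "kn t j \<le> x" "x < kn t (j+1)" by (auto split: if_splits)
  have "j \<le> l"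
  proof (rule ccontr)
    assume "\<not> j \<le> l"
    hence "kn t (l+1) \<le> kn t j" using kn_mono[OF st, of "l+1" j] 0 by simp
    thus False using A x2 by simp
  qed
  moreover have "l \<le> j"
  proof (rule ccontr)
    assume "\<not> l \<le> j"
    hence "kn t (j+1) \<le> kn t l" using kn_mono[OF st, of "j+1" l] lN by simp
    thus False using A x1 by simp
  qed
  ultimately show ?case by simp
next
  case (Suc q)
  from Suc.prems(3) have "bspl t q j x \<noteq> 0 \<or> bspl t q (j+1) x \<noteq> 0" by auto
  thus ?case
  proof
    assume "bspl t q j x \<noteq> 0"
    from Suc.IH[OF Suc.prems(1) _ this] Suc.prems(2) show ?thesis by simp
  next
    assume "bspl t q (j+1) x \<noteq> 0"
    from Suc.IH[OF _ _ this] Suc.prems(1,2) show ?thesis by simp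
  qed
qed

definition psi :: "real list \<Rightarrow> nat \<Rightarrow> nat \<Rightarrow> real \<Rightarrow> real" where
  "psi t q j y = (\<Prod>i=1..q. (y - kn t (j+i)))"

lemma psi_Suc1: "psi t (Suc q) j y = psi t q j y * (y - kn t (j + Suc q))"
  unfolding psi_def by (simp add: prod.nat_ivl_Suc' mult.commute)

lemma psi_Suc2: "1 \<le> j \<Longrightarrow> psi t (Suc q) (j - 1) y = (y - kn t j) * psi t q j y"
  unfolding psi_def
  apply (subst prod.atLeast_Suc_atMost, simp)
  apply (simp only: One_nat_def prod.shift_bounds_cl_Suc_ivl)
  apply simp
  done

lemma marsden:
  assumes st: "sorted t" and x1: "kn t l < x" and x2: "x < kn t (l+1)"
  shows "q + 1 \<le> l \<Longrightarrow> l + q + 1 \<le> length t \<Longrightarrow>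
     (\<Sum>j=l-q..l. psi t q j y * bspl t q j x) = (y - x) ^ q"
proof (induction q)
  case 0
  then show ?case using x1 x2 by (simp add: psi_def)
next
  case (Suc q)
  define B where "B j = bspl t q j x" for j
  define w1 where "w1 j = (x - kn t j) / (kn t (j+q+1) - kn t j)" for j
  define w2 where "w2 j = (kn t (j+q+2) - x) / (kn t (j+q+2) - kn t (j+1))" for j
  define P where "P j = psi t (Suc q) j y" for j
  have supp: "B j = 0" if "1 \<le> j" "j + q + 1 \<le> length t" "\<not> (j \<le> l \<and> l \<le> j + q)" for j
    using bspl_supp[OF st _ _ x1 x2, of j q] that Suc.prems unfolding B_def by auto
  have rec: "bspl t (Suc q) j x = w1 j * B j + w2 j * B (j+1)" for j
    by (simp add: w1_def w2_def B_def add.commute add.left_commute)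
  have "(\<Sum>j=l-Suc q..l. psi t (Suc q) j y * bspl t (Suc q) j x)
      = (\<Sum>j=l-Suc q..l. P j * w1 j * B j) + (\<Sum>j=l-Suc q..l. P j * w2 j * B (j+1))"
    apply (subst sum.distrib[symmetric])
    apply (rule sum.cong[OF refl])
    apply (simp only: rec P_def)
    apply (simp add: algebra_simps)
    done
  also have "(\<Sum>j=l-Suc q..l. P j * w1 j * B j) = (\<Sum>j=l-q..l. P j * w1 j * B j)"
  proof -
    have e: "{l - Suc q..l} = insert (l - Suc q) {l-q..l}" using Suc.prems by auto
    have "B (l - Suc q) = 0" using Suc.prems by (intro supp) auto
    thus ?thesis using Suc.prems by (simp add: e)
  qed
  also have "(\<Sum>j=l-Suc q..l. P j * w2 j * B (j+1)) = (\<Sum>j=l-q..l. P (j-1) * w2 (j-1) * B j)"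
  proof -
    have "(\<Sum>j=l-Suc q..l. P j * w2 j * B (j+1)) = (\<Sum>j=Suc (l-Suc q)..Suc l. P (j-1) * w2 (j-1) * B j)"
      by (subst sum.shift_bounds_cl_Suc_ivl) simp
    also have "Suc (l - Suc q) = l - q" using Suc.prems by simp
    also have "{l-q..Suc l} = insert (Suc l) {l-q..l}" by auto
    finally show ?thesis using supp[of "Suc l"] Suc.prems by simp
  qed
  also have "(\<Sum>j=l-q..l. P j * w1 j * B j) + (\<Sum>j=l-q..l. P (j-1) * w2 (j-1) * B j)
      = (\<Sum>j=l-q..l. (y - x) * (psi t q j y * B j))"
    unfolding sum.distrib[symmetric]
  proof (rule sum.cong[OF refl])
    fix j assume j: "j \<in> {l-q..l}"
    show "P j * w1 j * B j + P (j-1) * w2 (j-1) * B j = (y - x) * (psi t q j y * B j)"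
    proof (cases "B j = 0")
      case True then show ?thesis by simp
    next
      case False
      have j1: "2 \<le> j" "j + q + 1 \<le> length t" using j Suc.prems by auto
      have "j \<le> l \<and> l \<le> j + q" using False supp[of j] j1 by fastforce
      hence "kn t j \<le> kn t l" "kn t (l+1) \<le> kn t (j+q+1)"
        using kn_mono[OF st] j1 by auto
      hence d: "kn t (j+q+1) - kn t j > 0" using x1 x2 by linarith
      have P1: "P j = psi t q j y * (y - kn t (j+q+1))" unfolding P_def psi_Suc1 by simp
      have P2: "P (j-1) = (y - kn t j) * psi t q j y" unfolding P_def using psi_Suc2[of j t q y] j1 by simp
      have W2: "w2 (j-1) = (kn t (j+q+1) - x) / (kn t (j+q+1) - kn t j)"
        unfolding w2_def using j1 by (simp add: numeral_2_eq_2)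
      have key: "(y - T) * ((x - s)/(T - s)) + (y - s) * ((T - x)/(T - s)) = y - x"
        if "T - s > 0" for T s :: real
      proof -
        have "(y - T) * ((x - s)/(T - s)) + (y - s) * ((T - x)/(T - s))
            = ((y - T) * (x - s) + (y - s) * (T - x)) / (T - s)" by (simp only: times_divide_eq_right add_divide_distrib)
        also have "(y - T) * (x - s) + (y - s) * (T - x) = (y - x) * (T - s)" by (simp add: algebra_simps)
        finally show ?thesis using that by simp
      qed
      have "P j * w1 j * B j + P (j-1) * w2 (j-1) * B j
         = psi t q j y * B j * ((y - kn t (j+q+1)) * w1 j + (y - kn t j) * w2 (j-1))"
        unfolding P1 P2 by (simp add: algebra_simps)
      also have "\<dots> = psi t q j y * B j * (y - x)" unfolding W2 w1_def using key[OF d] by simp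
      finally show ?thesis by simp
    qed
  qed
  also have "\<dots> = (y - x) * (y - x) ^ q"
    using Suc.IH Suc.prems by (simp add: B_def sum_distrib_left[symmetric])
  finally show ?case by simp
qed




definition fscale :: "real \<Rightarrow> (real \<Rightarrow> real) \<Rightarrow> (real \<Rightarrow> real)" where
  "fscale c f = (\<lambda>x. c * f x)"

interpretation FV: vector_space fscale
  by unfold_locales (auto simp: fscale_def fun_eq_iff algebra_simps)

lemma fsum_apply: "(sum f A) x = (\<Sum>a\<in>A. f a (x::real)) " for f :: "'b \<Rightarrow> real \<Rightarrow> real"
  by (induction A rule: infinite_finite_induct) auto

definition rst :: "real set \<Rightarrow> (real \<Rightarrow> real) \<Rightarrow> real \<Rightarrow> real" where
  "rst I f = (\<lambda>x. if x \<in> I then f x else 0)"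

definition monoR :: "real set \<Rightarrow> nat \<Rightarrow> real \<Rightarrow> real" where
  "monoR I i = rst I (\<lambda>x. x ^ i)"

lemma poly_zero_on_infinite:
  fixes c :: "nat \<Rightarrow> real"
  assumes "infinite I" "\<forall>x\<in>I. (\<Sum>k\<le>n. c k * x^k) = 0" "k \<le> n"
  shows "c k = 0"
proof (rule ccontr)
  assume "c k \<noteq> 0"
  from polyfun_roots_finite[of c k n, OF this assms(3)] have "finite {z. (\<Sum>i\<le>n. c i * z^i) = 0}" .
  moreover have "I \<subseteq> {z. (\<Sum>i\<le>n. c i * z^i) = 0}" using assms(2) by auto
  ultimately show False using assms(1) finite_subset by blast
qed

lemma mono_inj:
  assumes "infinite I" shows "inj_on (monoR I) {..q}"
proof (rule inj_onI)
  fix i i' assume ii: "i \<in> {..q}" "i' \<in> {..q}" and eq: "monoR I i = monoR I i'"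
  show "i = i'"
  proof (rule ccontr)
    assume ne: "i \<noteq> i'"
    define c where "c k = (if k = i then 1 else 0) - (if k = i' then 1 else (0::real))" for k
    have "\<forall>x\<in>I. (\<Sum>k\<le>q. c k * x^k) = 0"
    proof
      fix x assume x: "x \<in> I"
      have "x ^ i = x ^ i'" using fun_cong[OF eq, of x] x by (simp add: monoR_def rst_def)
      moreover have "(\<Sum>k\<le>q. c k * x^k) = (\<Sum>k\<le>q. (if k = i then x^k else 0) - (if k = i' then x^k else 0))"
        by (rule sum.cong) (auto simp: c_def)
      moreover have "\<dots> = x^i - x^i'"
        using ii by (simp only: sum_subtractf) simp
      ultimately show "(\<Sum>k\<le>q. c k * x^k) = 0" by simp
    qed
    from poly_zero_on_infinite[OF assms this, of i] ii ne show False by (simp add: c_def)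
  qed
qed

lemma mono_indep:
  assumes "infinite I" shows "FV.independent (monoR I ` {..q})"
proof (rule FV.independent_if_scalars_zero)
  show "finite (monoR I ` {..q})" by simp
next
  fix f v assume s: "(\<Sum>x\<in>monoR I ` {..q}. fscale (f x) x) = 0" and v: "v \<in> monoR I ` {..q}"
  have s2: "(\<Sum>i\<le>q. fscale (f (monoR I i)) (monoR I i)) = 0"
    using s by (simp add: sum.reindex[OF mono_inj[OF assms]])
  have zz: "\<forall>x\<in>I. (\<Sum>i\<le>q. f (monoR I i) * x^i) = 0"
  proof
    fix x assume x: "x \<in> I"
    from fun_cong[OF s2, of x] show "(\<Sum>i\<le>q. f (monoR I i) * x^i) = 0"
      using x by (simp add: fsum_apply fscale_def monoR_def rst_def)
  qed
  from v obtain i where i: "i \<le> q" "v = monoR I i" by auto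
  from poly_zero_on_infinite[OF assms zz i(1)] show "f v = 0" by (simp add: i(2))
qed

lemma loc_indep:
  fixes B :: "nat \<Rightarrow> real \<Rightarrow> real"
  assumes I: "infinite I" and fin: "finite J" and cardJ: "card J \<le> q + 1"
    and sp: "\<forall>i\<le>q. monoR I i \<in> FV.span ((\<lambda>j. rst I (B j)) ` J)"
    and zero: "\<forall>x\<in>I. (\<Sum>j\<in>J. c j * B j x) = 0" and j0: "j0 \<in> J"
  shows "c j0 = 0"
proof (rule ccontr)
  assume c0: "c j0 \<noteq> 0"
  define T where "T = (\<lambda>j. rst I (B j)) ` (J - {j0})"
  have finT: "finite T" using fin by (simp add: T_def)
  have cT: "card T \<le> q" unfolding T_def
    by (rule order.trans[OF card_image_le]) (use fin cardJ j0 in auto)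
  have eq: "rst I (B j0) = (\<Sum>j\<in>J-{j0}. fscale (- c j / c j0) (rst I (B j)))"
  proof
    fix x
    show "rst I (B j0) x = (\<Sum>j\<in>J-{j0}. fscale (- c j / c j0) (rst I (B j))) x"
    proof (cases "x \<in> I")
      case True
      have "(\<Sum>j\<in>J. c j * B j x) = c j0 * B j0 x + (\<Sum>j\<in>J-{j0}. c j * B j x)"
        using fin j0 by (simp add: sum.remove)
      hence "B j0 x = - (\<Sum>j\<in>J-{j0}. c j * B j x) / c j0" using zero True c0
        by (simp add: field_simps)
      thus ?thesis using True
        by (simp add: fsum_apply fscale_def rst_def sum_divide_distrib sum_negf)
    next
      case False then show ?thesis by (simp add: fsum_apply fscale_def rst_def)
    qed
  qed
  have "rst I (B j0) \<in> FV.span T"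
    unfolding eq T_def by (intro FV.span_sum FV.span_scale FV.span_base) auto
  hence "(\<lambda>j. rst I (B j)) ` J \<subseteq> FV.span T"
  proof (clarsimp)
    fix j assume "rst I (B j0) \<in> FV.span T" "j \<in> J"
    thus "rst I (B j) \<in> FV.span T"
      by (cases "j = j0") (auto simp: T_def intro!: FV.span_base)
  qed
  hence "FV.span ((\<lambda>j. rst I (B j)) ` J) \<subseteq> FV.span T"
    by (intro FV.span_minimal) auto
  hence "monoR I ` {..q} \<subseteq> FV.span T" using sp by auto
  from FV.independent_span_bound[OF finT mono_indep[OF I] this]
  have "card (monoR I ` {..q}) \<le> card T" by simp
  moreover have "card (monoR I ` {..q}) = q + 1"
    using card_image[OF mono_inj[OF I]] by simp
  ultimately show False using cT by simp
qed




lemma psi_coeffs: "\<exists>a. \<forall>y. psi t q j y = (\<Sum>k\<le>q. a k * y ^ k)"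
proof -
  define P where "P = (\<Prod>i=1..q. [:- kn t (j+i), 1:])"
  have deg: "degree P \<le> q"
    unfolding P_def
    by (rule order.trans[OF degree_prod_sum_le]) (auto intro: order.trans[OF sum_mono[of _ _ "\<lambda>_. 1"]])
  have "psi t q j y = poly P y" for y unfolding P_def psi_def by (simp add: poly_prod)
  also have "poly P y = (\<Sum>k\<le>q. coeff P k * y ^ k)" for y
  proof -
    have "poly P y = poly (\<Sum>i\<le>q. monom (coeff P i) i) y" using poly_as_sum_of_monoms'[OF deg] by simp
    also have "\<dots> = (\<Sum>k\<le>q. coeff P k * y ^ k)" by (simp add: poly_sum poly_monom)
    finally show ?thesis .
  qed
  finally show ?thesis by blast
qed

lemma marsden_span:
  assumes st: "sorted t" and l: "q + 1 \<le> l" "l + q + 1 \<le> length t"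
    and I: "I = {kn t l <..< kn t (l+1)}"
  shows "\<forall>i\<le>q. monoR I i \<in> FV.span ((\<lambda>j. rst I (bspl t q j)) ` {l-q..l})"
proof (intro allI impI)
  fix i assume iq: "i \<le> q"
  define J where "J = {l-q..l}"
  obtain a where a: "\<And>j y. psi t q j y = (\<Sum>k\<le>q. a j k * y ^ k)"
    using psi_coeffs[of t q] by metis
  have coef: "(\<Sum>j\<in>J. a j k * bspl t q j x) = of_nat (q choose k) * (-x) ^ (q - k)"
    if x: "x \<in> I" and k: "k \<le> q" for x k
  proof -
    have "\<forall>y. (\<Sum>k\<le>q. (\<Sum>j\<in>J. a j k * bspl t q j x) * y ^ k)
             = (\<Sum>k\<le>q. (of_nat (q choose k) * (-x) ^ (q - k)) * y ^ k)"
    proof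
      fix y
      have "(\<Sum>k\<le>q. (\<Sum>j\<in>J. a j k * bspl t q j x) * y ^ k)
          = (\<Sum>j\<in>J. (\<Sum>k\<le>q. a j k * y ^ k) * bspl t q j x)"
        unfolding sum_distrib_right
        by (subst sum.swap) (simp add: mult_ac)
      also have "\<dots> = (\<Sum>j\<in>J. psi t q j y * bspl t q j x)" by (simp add: a)
      also have "\<dots> = (y - x) ^ q" unfolding J_def
      proof (rule marsden[OF st])
        show "kn t l < x" "x < kn t (l+1)" using x I by auto
      qed (use l in auto)
      also have "\<dots> = (y + (-x)) ^ q" by simp
      also have "\<dots> = (\<Sum>k\<le>q. (of_nat (q choose k) * (-x) ^ (q - k)) * y ^ k)"
        unfolding binomial_ring by (rule sum.cong[OF refl]) (simp only: mult_ac)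
      finally show "(\<Sum>k\<le>q. (\<Sum>j\<in>J. a j k * bspl t q j x) * y ^ k)
             = (\<Sum>k\<le>q. (of_nat (q choose k) * (-x) ^ (q - k)) * y ^ k)" .
    qed
    from polyfun_eq_coeffs[THEN iffD1, OF this] k show ?thesis by blast
  qed
  define k where "k = q - i"
  have k: "k \<le> q" "q - k = i" using iq by (auto simp: k_def)
  define C where "C = of_nat (q choose k) * (-1::real) ^ i"
  have C: "C \<noteq> 0" using k by (simp add: C_def)
  have eq: "monoR I i = fscale (1 / C) (\<Sum>j\<in>J. fscale (a j k) (rst I (bspl t q j)))"
  proof
    fix x
    show "monoR I i x = fscale (1 / C) (\<Sum>j\<in>J. fscale (a j k) (rst I (bspl t q j))) x"
    proof (cases "x \<in> I")
      case True
      have "(\<Sum>j\<in>J. fscale (a j k) (rst I (bspl t q j))) x = (\<Sum>j\<in>J. a j k * bspl t q j x)"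
        using True by (simp add: fsum_apply fscale_def rst_def)
      also have "\<dots> = C * x ^ i" unfolding coef[OF True k(1)] k(2) C_def
        using power_minus[of x i] by (simp only: mult_ac)
      finally show ?thesis using True C by (simp add: fscale_def monoR_def rst_def)
    next
      case False thus ?thesis by (simp add: fsum_apply fscale_def monoR_def rst_def)
    qed
  qed
  show "monoR I i \<in> FV.span ((\<lambda>j. rst I (bspl t q j)) ` {l-q..l})"
    unfolding eq J_def by (intro FV.span_scale FV.span_sum FV.span_base) auto
qed

lemma bspl_indep:
  assumes st: "sorted t" and lo: "1 \<le> lo" and hi: "hi + q + 1 \<le> length t"
    and ex: "\<forall>j\<in>{lo..hi}. \<exists>l. j \<le> l \<and> lo + q \<le> l \<and> l \<le> j + q \<and> l \<le> hi
                \<and> kn t l < kn t (l+1) \<and> {kn t l<..<kn t (l+1)} \<subseteq> X"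
    and zero: "\<forall>x\<in>X. (\<Sum>j=lo..hi. c j * bspl t q j x) = 0"
  shows "\<forall>j\<in>{lo..hi}. c j = 0"
proof
  fix j assume j: "j \<in> {lo..hi}"
  then obtain l where l: "j \<le> l" "lo + q \<le> l" "l \<le> j + q" "l \<le> hi"
     "kn t l < kn t (l+1)" "{kn t l<..<kn t (l+1)} \<subseteq> X" using ex by blast
  define I where "I = {kn t l<..<kn t (l+1)}"
  have infI: "infinite I" unfolding I_def using l(5) by simp
  have sub: "{l-q..l} \<subseteq> {lo..hi}" using l by auto
  have z: "\<forall>x\<in>I. (\<Sum>j\<in>{l-q..l}. c j * bspl t q j x) = 0"
  proof
    fix x assume x: "x \<in> I"
    have "(\<Sum>j=lo..hi. c j * bspl t q j x) = (\<Sum>j\<in>{l-q..l}. c j * bspl t q j x)"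
    proof (rule sum.mono_neutral_right[OF _ sub])
      show "finite {lo..hi}" by simp
      show "\<forall>i\<in>{lo..hi} - {l - q..l}. c i * bspl t q i x = 0"
      proof
        fix i assume i: "i \<in> {lo..hi} - {l - q..l}"
        have nb: "\<not> (i \<le> l \<and> l \<le> i + q)" using i by auto
        have hs: "1 \<le> l" "l + 1 \<le> length t" "kn t l < x" "x < kn t (l+1)" "1 \<le> i" "i + q + 1 \<le> length t"
          using x i lo hi l unfolding I_def by auto
        have "bspl t q i x = 0"
          using bspl_supp[OF st hs] nb by blast
        thus "c i * bspl t q i x = 0" by simp
      qed
    qed
    thus "(\<Sum>j\<in>{l-q..l}. c j * bspl t q j x) = 0" using zero x l(6) I_def by auto
  qed
  have sp: "\<forall>i\<le>q. monoR I i \<in> FV.span ((\<lambda>j. rst I (bspl t q j)) ` {l-q..l})"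
    using marsden_span[OF st _ _ I_def, of q] l lo hi by simp
  show "c j = 0"
    using loc_indep[OF infI _ _ sp z, of j] l by auto
qed




lemma knot_mult_ge:
  assumes st: "sorted t" and "1 \<le> u" "u \<le> v" "v \<le> length t" "kn t u = kn t v"
  shows "v - u + 1 \<le> knot_mult t (kn t u)"
proof -
  have "{u..v} \<subseteq> {k \<in> {1..length t}. kn t k = kn t u}"
  proof
    fix k assume k: "k \<in> {u..v}"
    have "kn t u \<le> kn t k" using kn_mono[OF st, of u k] k assms by auto
    moreover have "kn t k \<le> kn t v" using kn_mono[OF st, of k v] k assms by auto
    ultimately have "kn t k = kn t u" using assms by simp
    thus "k \<in> {k \<in> {1..length t}. kn t k = kn t u}" using k assms by auto
  qed
  from card_mono[OF _ this] show ?thesis unfolding knot_mult_def using assms(3) by simp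
qed

context
  fixes t p m a b
  assumes K: "open_C1_knots t p m a b"
begin

lemma K_basic: "1 \<le> p" "length t = m + p + 1" "sorted t" "a < b"
   "\<And>i. i \<in> {1..p+1} \<Longrightarrow> kn t i = a" "\<And>i. i \<in> {m+1..m+p+1} \<Longrightarrow> kn t i = b"
   "\<And>i. i \<in> {p+2..m} \<Longrightarrow> knot_mult t (kn t i) \<le> p - 1"
  using K unfolding open_C1_knots_def by auto

lemma K_m: "p + 1 \<le> m"
proof (rule ccontr)
  assume "\<not> p + 1 \<le> m"
  hence "kn t (m+1) = a" "kn t (m+1) = b" using K_basic(5)[of "m+1"] K_basic(6)[of "m+1"] by auto
  thus False using K_basic(4) by simp
qed

lemma K_first: "kn t 1 < kn t (p+2)"
proof -
  have le: "kn t 1 \<le> kn t (p+2)" using kn_mono[OF K_basic(3), of 1 "p+2"] K_basic(2) K_m by simp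
  show ?thesis
  proof (rule ccontr)
    assume "\<not> ?thesis"
    hence eq: "kn t 1 = kn t (p+2)" using le by simp
    show False
    proof (cases "p + 2 \<le> m")
      case True
      have "p + 2 \<le> knot_mult t (kn t 1)"
        using knot_mult_ge[OF K_basic(3), of 1 "p+2"] eq K_basic(2) K_m by simp
      moreover have "knot_mult t (kn t (p+2)) \<le> p - 1" using K_basic(7) True by simp
      ultimately show False using eq by simp
    next
      case False
      hence "m = p + 1" using K_m by simp
      hence "kn t (p+2) = b" using K_basic(6) by simp
      moreover have "kn t 1 = a" using K_basic(5) by simp
      ultimately show False using eq K_basic(4) by simp
    qed
  qed
qed

lemma K_step:
  assumes j: "2 \<le> j" "j \<le> m"
  shows "kn t (max j (p+1)) < kn t (min (j+p-1) m + 1)"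
proof -
  note B = K_basic
  define u where "u = max j (p+1)"
  define v where "v = min (j+p-1) m + 1"
  have uv: "1 \<le> u" "u < v" "v \<le> length t" using j K_m B(1,2) by (auto simp: u_def v_def)
  have le: "kn t u \<le> kn t v" using kn_mono[OF B(3), of u v] uv by simp
  show ?thesis unfolding u_def[symmetric] v_def[symmetric]
  proof (rule ccontr)
    assume "\<not> kn t u < kn t v"
    hence eq: "kn t u = kn t v" using le by simp
    show False
    proof (cases "j \<le> p + 1")
      case True
      hence u: "u = p + 1" by (simp add: u_def)
      have "p + 2 \<le> v" using uv u by simp
      hence "kn t (p+1) \<le> kn t (p+2)" "kn t (p+2) \<le> kn t v"
        using kn_mono[OF B(3)] uv B(2) by auto
      hence "kn t (p+2) = kn t 1" using eq u B(5)[of 1] B(5)[of "p+1"] by simp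
      thus False using K_first by simp
    next
      case False
      hence u: "u = j" by (simp add: u_def)
      have mj: "knot_mult t (kn t j) \<le> p - 1" using B(7) False j by simp
      show False
      proof (cases "m \<le> j + p - 1")
        case True
        hence "v = m + 1" by (simp add: v_def)
        hence "kn t j = b" "kn t (m+p+1) = b" using eq u B(6) by auto
        hence "m + p + 1 - j + 1 \<le> knot_mult t (kn t j)"
          using knot_mult_ge[OF B(3), of j "m+p+1"] j B(2) by simp
        thus False using mj j by simp
      next
        case False
        hence "v = j + p" using B(1) by (simp add: v_def)
        hence "j + p - j + 1 \<le> knot_mult t (kn t j)"
          using knot_mult_ge[OF B(3), of j "j+p"] eq u uv by simp
        thus False using mj B(1) by simp
      qed
    qed
  qed
qed

lemma K_ex_step:
  assumes "1 \<le> u" "u < v" "v \<le> length t" "kn t u < kn t v"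
  shows "\<exists>l. u \<le> l \<and> l < v \<and> kn t l < kn t (l+1)"
  using assms
proof (induction v)
  case 0 then show ?case by simp
next
  case (Suc v)
  show ?case
  proof (cases "kn t v < kn t (Suc v)")
    case True
    then show ?thesis using Suc.prems by (intro exI[of _ v]) auto
  next
    case False
    hence "kn t u < kn t v" using Suc.prems by simp
    moreover have "u < v" using Suc.prems calculation by (cases "u = v") auto
    ultimately obtain l where "u \<le> l \<and> l < v \<and> kn t l < kn t (l+1)"
      using Suc.IH Suc.prems by auto
    thus ?thesis by (intro exI[of _ l]) auto
  qed
qed

lemma K_int_sub: "1 \<le> l \<Longrightarrow> l + 1 \<le> length t \<Longrightarrow> {kn t l<..<kn t (l+1)} \<subseteq> {a..b}"
proof -
  assume l: "1 \<le> l" "l + 1 \<le> length t"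
  have "kn t 1 \<le> kn t l" "kn t (l+1) \<le> kn t (length t)"
    using kn_mono[OF K_basic(3)] l by auto
  moreover have "kn t 1 = a" "kn t (length t) = b" using K_basic(2,5,6) by auto
  ultimately show ?thesis by auto
qed

lemma bspl_open_indep:
  assumes zero: "\<forall>x\<in>{a..b}. (\<Sum>j=1..m. c j * bspl t p j x) = 0"
  shows "\<forall>j\<in>{1..m}. c j = 0"
proof (rule bspl_indep[OF K_basic(3) _ _ _ zero])
  show "m + p + 1 \<le> length t" using K_basic(2) by simp
  show "\<forall>j\<in>{1..m}. \<exists>l. j \<le> l \<and> 1 + p \<le> l \<and> l \<le> j + p \<and> l \<le> m \<and>
          kn t l < kn t (l + 1) \<and> {kn t l<..<kn t (l + 1)} \<subseteq> {a..b}"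
  proof
    fix j assume j: "j \<in> {1..m}"
    define u where "u = max j (p+1)"
    define v where "v = min (j+p) m + 1"
    have uv: "1 \<le> u" "u < v" "v \<le> length t" using j K_m K_basic(1,2) by (auto simp: u_def v_def)
    have lt: "kn t u < kn t v"
    proof (cases "j = 1")
      case True
      hence "u = p + 1" "v = p + 2" using K_m by (auto simp: u_def v_def)
      thus ?thesis using K_first K_basic(5)[of 1] K_basic(5)[of "p+1"] by simp
    next
      case False
      hence "kn t u < kn t (min (j+p-1) m + 1)" using K_step[of j] j by (simp add: u_def)
      also have "\<dots> \<le> kn t v" using kn_mono[OF K_basic(3)] uv by (auto simp: v_def)
      finally show ?thesis .
    qed
    obtain l where l: "u \<le> l" "l < v" "kn t l < kn t (l+1)" using K_ex_step[OF uv lt] by auto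
    show "\<exists>l. j \<le> l \<and> 1 + p \<le> l \<and> l \<le> j + p \<and> l \<le> m \<and>
          kn t l < kn t (l + 1) \<and> {kn t l<..<kn t (l + 1)} \<subseteq> {a..b}"
      using l uv K_int_sub[of l] by (intro exI[of _ l]) (auto simp: u_def v_def)
  qed
qed simp

lemma dspl_den: "j \<in> {1..m-1} \<Longrightarrow> kn t (j+1) < kn t (j+p+1)"
proof -
  assume j: "j \<in> {1..m-1}"
  have "kn t (j+1) \<le> kn t (max (j+1) (p+1))" using kn_mono[OF K_basic(3)] K_basic(2) K_m j by auto
  also have "\<dots> < kn t (min (j+1+p-1) m + 1)" using K_step[of "j+1"] j by auto
  also have "\<dots> \<le> kn t (j+p+1)" using kn_mono[OF K_basic(3)] K_basic(2) K_m j by auto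
  finally show ?thesis .
qed

lemma dspl_open_indep:
  assumes zero: "\<forall>x\<in>{a..b}. (\<Sum>j=1..m-1. c j * dspl t p j x) = 0"
  shows "\<forall>j\<in>{1..m-1}. c j = 0"
proof -
  define \<kappa> where "\<kappa> j = real p / (kn t (j+p+1) - kn t (j+1))" for j
  define d where "d j = c (j - 1) * \<kappa> (j - 1)" for j
  have z2: "\<forall>x\<in>{a..b}. (\<Sum>j=2..m. d j * bspl t (p-1) j x) = 0"
  proof
    fix x assume x: "x \<in> {a..b}"
    have e: "{2..m} = {Suc 1..Suc (m-1)}" using K_m K_basic(1) by auto
    have "(\<Sum>j=2..m. d j * bspl t (p-1) j x) = (\<Sum>j=Suc 1..Suc (m-1). d j * bspl t (p-1) j x)"
      by (simp only: e)
    also have "\<dots> = (\<Sum>j=1..m-1. d (Suc j) * bspl t (p-1) (Suc j) x)"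
      by (rule sum.shift_bounds_cl_Suc_ivl)
    also have "\<dots> = (\<Sum>j=1..m-1. c j * dspl t p j x)"
      by (simp add: d_def \<kappa>_def dspl_def mult.assoc)
    finally show "(\<Sum>j=2..m. d j * bspl t (p-1) j x) = 0" using zero x by simp
  qed
  have dz: "\<forall>j\<in>{2..m}. d j = 0"
  proof (rule bspl_indep[OF K_basic(3) _ _ _ z2])
    show "m + (p - 1) + 1 \<le> length t" using K_basic(2) by simp
    show "\<forall>j\<in>{2..m}. \<exists>l. j \<le> l \<and> 2 + (p - 1) \<le> l \<and> l \<le> j + (p - 1) \<and> l \<le> m \<and>
          kn t l < kn t (l + 1) \<and> {kn t l<..<kn t (l + 1)} \<subseteq> {a..b}"
    proof
      fix j assume j: "j \<in> {2..m}"
      define u where "u = max j (p+1)"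
      define v where "v = min (j+p-1) m + 1"
      have uv: "1 \<le> u" "u < v" "v \<le> length t" using j K_m K_basic(1,2) by (auto simp: u_def v_def)
      have lt: "kn t u < kn t v" using K_step[of j] j by (simp add: u_def v_def)
      obtain l where l: "u \<le> l" "l < v" "kn t l < kn t (l+1)" using K_ex_step[OF uv lt] by auto
      show "\<exists>l. j \<le> l \<and> 2 + (p - 1) \<le> l \<and> l \<le> j + (p - 1) \<and> l \<le> m \<and>
          kn t l < kn t (l + 1) \<and> {kn t l<..<kn t (l + 1)} \<subseteq> {a..b}"
        using l uv K_int_sub[of l] K_basic(1) by (intro exI[of _ l]) (auto simp: u_def v_def)
    qed
  qed simp
  show ?thesis
  proof
    fix j assume j: "j \<in> {1..m-1}"
    have "d (j+1) = 0" using dz j by auto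
    moreover have "\<kappa> j \<noteq> 0" using dspl_den[OF j] K_basic(1) by (simp add: \<kappa>_def)
    ultimately show "c j = 0" by (simp add: d_def)
  qed
qed

end




context
  fixes nr :: nat
  assumes nr3: "3 \<le> nr"
begin

definition "phi = pi / real nr"

lemma phi_pos: "0 < phi" "phi < pi" "3 * phi \<le> pi"  "phi < pi / 2"
proof -
  have n: "real nr \<ge> 3" using nr3 by simp
  show "0 < phi" using n by (simp add: phi_def)
  show "3 * phi \<le> pi" using n by (simp add: phi_def field_simps)
  thus "phi < pi" "phi < pi / 2" using pi_gt_zero \<open>0 < phi\<close> by linarith+
qed

lemma th1: "theta nr 1 = 2 * pi - phi"
  unfolding theta_def phi_def by (simp add: field_simps)

lemma th2: "theta nr 2 = 2 * pi - 3 * phi"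
  unfolding theta_def phi_def by (simp add: field_simps)

lemma thn: "theta nr nr = phi"
proof -
  have n: "real nr > 0" using nr3 by simp
  show ?thesis unfolding theta_def phi_def using n by (simp add: field_simps)
qed

abbreviation "C \<equiv> cos phi"
abbreviation "Sn \<equiv> sin phi"

lemma CS: "C > 0" "Sn > 0" "cos (3 * phi) < C"
  using phi_pos cos_gt_zero_pi[of phi] sin_gt_zero[of phi] cos_monotone_0_pi[of phi "3*phi"] by auto

lemma E_vals:
  "Ebar_e nr 2 1 2 = 1/3 - 1/6 * C - sqrt 3 / 6 * Sn"
  "Ebar_e nr 3 1 2 = 1/3 - 1/6 * C + sqrt 3 / 6 * Sn"
  "Ebar_e nr 1 1 2 = 1/3 + 1/3 * C"
  "Ebar_e nr 2 nr 2 = 1/3 - 1/6 * C + sqrt 3 / 6 * Sn"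
  "Ebar_e nr 3 nr 2 = 1/3 - 1/6 * C - sqrt 3 / 6 * Sn"
  "Ebar_e nr 1 nr 2 = 1/3 + 1/3 * C"
  "Ebar_e nr 2 (nr+1) 2 = 1/3 - 1/6 * C - sqrt 3 / 6 * Sn"
  "Ebar_e nr 3 (nr+1) 2 = 1/3 - 1/6 * C + sqrt 3 / 6 * Sn"
  "Ebar_e nr 2 2 2 = 1/3 - 1/6 * cos (3*phi) - sqrt 3 / 6 * sin (3*phi)"
  "Ebar_e nr 3 2 2 = 1/3 - 1/6 * cos (3*phi) + sqrt 3 / 6 * sin (3*phi)"
  "Ebar_e nr l i 1 = 1/3"
  using nr3 th1 th2 thn by (simp_all add: Ebar_e_def Let_def)

lemma L1: "u*((a - c - d) - (a - c + d)) + v*((a - c + d) - (a - c - d)) = 2*(v-u)*d" for u v a c d :: real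
  by (simp add: algebra_simps)
lemma L2: "u*((a - c3 - d3) - (a - c - d)) + u*((a - c3 + d3) - (a - c + d)) = 2*u*(c - c3)" for u a c d c3 d3 :: real
  by (simp add: algebra_simps)
lemma L3: "u*((a - c - d) - a) + v*((a - c + d) - a) = -((u+v)*c) + (v-u)*d" for u v a c d :: real
  by (simp add: algebra_simps)
lemma L4: "u*((a - c + d) - a) + v*((a - c - d) - a) = -((u+v)*c) - (v-u)*d" for u v a c d :: real
  by (simp add: algebra_simps)
lemma L5: "u*(a + c') + v*(a - c - d) + w*(a - c + d) = (a*(u+v+w) + u*c' - (v+w)*c) + (w - v)*d" for u v w a c c' d :: real
  by (simp add: algebra_simps)
lemma L6: "u*(a + c') + v*(a - c + d) + w*(a - c - d) = (a*(u+v+w) + u*c' - (v+w)*c) - (w - v)*d" for u v w a c c' d :: real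
  by (simp add: algebra_simps)

lemma sq3: "sqrt 3 / 6 * Sn > 0" using CS by simp

lemma T1:
  assumes "\<forall>i\<in>{1..nr}. u * (Ebar_e nr 2 (i+1) 2 - Ebar_e nr 2 i 2)
                      + v * (Ebar_e nr 3 (i+1) 2 - Ebar_e nr 3 i 2) = 0"
  shows "u = 0 \<and> v = 0"
proof -
  have e1: "u * (Ebar_e nr 2 (nr+1) 2 - Ebar_e nr 2 nr 2) + v * (Ebar_e nr 3 (nr+1) 2 - Ebar_e nr 3 nr 2) = 0"
    using assms nr3 by auto
  have "1 \<in> {1..nr}" using nr3 by simp
  from assms[rule_format, OF this]
  have e2: "u * (Ebar_e nr 2 2 2 - Ebar_e nr 2 1 2) + v * (Ebar_e nr 3 2 2 - Ebar_e nr 3 1 2) = 0"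
    by (simp only: one_add_one)
  from e1 have "2*(v-u)*(sqrt 3 / 6 * Sn) = 0" unfolding E_vals L1 .
  hence uv: "u = v" using CS(2) by auto
  from e2 have "2*u*(1/6 * C - 1/6 * cos (3*phi)) = 0" unfolding E_vals uv L2 .
  hence "u = 0" using CS by simp
  thus ?thesis using uv by simp
qed

lemma T2:
  assumes "\<forall>i\<in>{1..nr}. u * (Ebar_e nr 2 i 2 - Ebar_e nr 2 i 1)
                      + v * (Ebar_e nr 3 i 2 - Ebar_e nr 3 i 1) = 0"
  shows "u = 0 \<and> v = 0"
proof -
  have e1: "u * (Ebar_e nr 2 1 2 - Ebar_e nr 2 1 1) + v * (Ebar_e nr 3 1 2 - Ebar_e nr 3 1 1) = 0"
    using assms nr3 by auto
  have e2: "u * (Ebar_e nr 2 nr 2 - Ebar_e nr 2 nr 1) + v * (Ebar_e nr 3 nr 2 - Ebar_e nr 3 nr 1) = 0"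
    using assms nr3 by auto
  from e1 have f1: "-((u+v)*(1/6*C)) + (v-u)*(sqrt 3 / 6 * Sn) = 0" unfolding E_vals L3 .
  from e2 have f2: "-((u+v)*(1/6*C)) - (v-u)*(sqrt 3 / 6 * Sn) = 0" unfolding E_vals L4 .
  have "(v-u)*(sqrt 3 / 6 * Sn) = 0" "(u+v)*(1/6*C) = 0" using f1 f2 by linarith+
  hence "v - u = 0" "u + v = 0" using sq3 CS by auto
  thus ?thesis by simp
qed

lemma T3:
  assumes "\<forall>b\<in>{1..2*nr}. u * Ebar nr 1 b + v * Ebar nr 2 b + w * Ebar nr 3 b = 0"
  shows "u = 0 \<and> v = 0 \<and> w = 0"
proof -
  have e0: "u * Ebar_e nr 1 1 1 + v * Ebar_e nr 2 1 1 + w * Ebar_e nr 3 1 1 = 0"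
    using assms[rule_format, of 1] nr3 by (simp add: Ebar_def)
  have e1: "u * Ebar_e nr 1 1 2 + v * Ebar_e nr 2 1 2 + w * Ebar_e nr 3 1 2 = 0"
    using assms[rule_format, of "nr+1"] nr3 by (simp add: Ebar_def)
  have e2: "u * Ebar_e nr 1 nr 2 + v * Ebar_e nr 2 nr 2 + w * Ebar_e nr 3 nr 2 = 0"
    using assms[rule_format, of "nr+nr"] nr3 by (simp add: Ebar_def)
  from e0 have s: "u + v + w = 0" unfolding E_vals by simp
  from e1 have f1: "(1/3*(u+v+w) + u*(1/3*C) - (v+w)*(1/6*C)) + (w - v)*(sqrt 3 / 6 * Sn) = 0"
    unfolding E_vals L5 .
  from e2 have f2: "(1/3*(u+v+w) + u*(1/3*C) - (v+w)*(1/6*C)) - (w - v)*(sqrt 3 / 6 * Sn) = 0"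
    unfolding E_vals L6 .
  have g: "(w - v)*(sqrt 3 / 6 * Sn) = 0" "1/3*(u+v+w) + u*(1/3*C) - (v+w)*(1/6*C) = 0"
    using f1 f2 by linarith+
  hence vw: "v = w" using CS(2) by auto
  have u: "u = -2 * v" using s vw by simp
  from g(2) s have "u*(1/3*C) - (v+w)*(1/6*C) = 0" by simp
  hence "v * C = 0" unfolding u vw by (simp add: algebra_simps)
  hence "v = 0" using CS by simp
  thus ?thesis using vw s by simp
qed

end




definition lind :: "'x set \<Rightarrow> 'i set \<Rightarrow> ('i \<Rightarrow> 'x \<Rightarrow> real) \<Rightarrow> bool" where
  "lind X I f \<longleftrightarrow> (\<forall>c. (\<forall>x\<in>X. (\<Sum>i\<in>I. c i * f i x) = 0) \<longrightarrow> (\<forall>i\<in>I. c i = 0))"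

definition RowInd :: "nat \<Rightarrow> nat \<Rightarrow> (nat \<Rightarrow> nat \<Rightarrow> real) \<Rightarrow> bool" where
  "RowInd n K M \<longleftrightarrow> (\<forall>Z \<subseteq> {1..n}. (\<forall>a\<in>Z. \<exists>b\<in>{1..K}. M a b \<noteq> 0) \<longrightarrow>
     (\<forall>c. (\<forall>b\<in>{1..K}. (\<Sum>a\<in>Z. c a * M a b) = 0) \<longrightarrow> (\<forall>a\<in>Z. c a = 0)))"

lemma matfun_nzli:
  assumes L: "lind X {1..K} v" and R: "RowInd n K M"
  shows "nonzero_lin_indep X n (matfun K M v)"
  unfolding nonzero_lin_indep_def Let_def
proof (intro allI impI)
  fix c
  define Z where "Z = {a \<in> {1..n}. \<exists>x\<in>X. matfun K M v a x \<noteq> 0}"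
  assume h: "\<forall>x\<in>X. (\<Sum>a\<in>{a \<in> {1..n}. \<exists>x\<in>X. matfun K M v a x \<noteq> 0}. c a * matfun K M v a x) = 0"
  hence h': "\<forall>x\<in>X. (\<Sum>a\<in>Z. c a * matfun K M v a x) = 0" by (simp add: Z_def)
  have finZ: "finite Z" unfolding Z_def by simp
  have Zsub: "Z \<subseteq> {1..n}" unfolding Z_def by auto
  have nz: "\<forall>a\<in>Z. \<exists>b\<in>{1..K}. M a b \<noteq> 0"
  proof
    fix a assume "a \<in> Z"
    then obtain x where "matfun K M v a x \<noteq> 0" unfolding Z_def by auto
    thus "\<exists>b\<in>{1..K}. M a b \<noteq> 0" unfolding matfun_def
      by (metis (no_types, lifting) mult_eq_0_iff sum.neutral)
  qed
  have "\<forall>x\<in>X. (\<Sum>b\<in>{1..K}. (\<Sum>a\<in>Z. c a * M a b) * v b x) = 0"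
  proof
    fix x assume x: "x \<in> X"
    have "(\<Sum>b\<in>{1..K}. (\<Sum>a\<in>Z. c a * M a b) * v b x) = (\<Sum>a\<in>Z. c a * matfun K M v a x)"
      unfolding matfun_def sum_distrib_left sum_distrib_right
      by (subst sum.swap) (simp add: mult_ac)
    thus "(\<Sum>b\<in>{1..K}. (\<Sum>a\<in>Z. c a * M a b) * v b x) = 0" using h' x by simp
  qed
  from L[unfolded lind_def, THEN spec[of _ "\<lambda>b. \<Sum>a\<in>Z. c a * M a b"]] this
  have "\<forall>b\<in>{1..K}. (\<Sum>a\<in>Z. c a * M a b) = 0" by simp
  with R Zsub nz show "\<forall>a\<in>Z. c a = 0" unfolding RowInd_def by blast
qed

lemma lind_cong:
  assumes "\<And>i x. i \<in> I \<Longrightarrow> x \<in> X \<Longrightarrow> f i x = g i x"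
  shows "lind X I f = lind X I g"
  unfolding lind_def using assms by (simp cong: sum.cong)

lemma lind_tensor:
  assumes fI: "finite I" and fJ: "finite J" and LF: "lind X I f" and LG: "lind Y J g"
  shows "lind (X \<times> Y) (I \<times> J) (\<lambda>(i,j) (x,y). f i x * g j y)"
  unfolding lind_def
proof (intro allI impI)
  fix c :: "'a \<times> 'b \<Rightarrow> real"
  assume h: "\<forall>xy\<in>X \<times> Y. (\<Sum>ij\<in>I \<times> J. c ij * (case ij of (i, j) \<Rightarrow> \<lambda>(x, y). f i x * g j y) xy) = 0"
  have h2: "\<forall>x\<in>X. \<forall>j\<in>J. (\<Sum>i\<in>I. c (i,j) * f i x) = 0"
  proof (rule ballI)
    fix x assume x: "x \<in> X"
    have "\<forall>y\<in>Y. (\<Sum>j\<in>J. (\<Sum>i\<in>I. c (i,j) * f i x) * g j y) = 0"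
    proof
      fix y assume y: "y \<in> Y"
      have "(\<Sum>ij\<in>I \<times> J. c ij * (case ij of (i, j) \<Rightarrow> \<lambda>(x, y). f i x * g j y) (x,y))
          = (\<Sum>i\<in>I. \<Sum>j\<in>J. c (i,j) * (f i x * g j y))"
        unfolding sum.cartesian_product by (rule sum.cong) auto
      also have "\<dots> = (\<Sum>j\<in>J. (\<Sum>i\<in>I. c (i,j) * f i x) * g j y)"
        unfolding sum_distrib_right by (subst sum.swap) (simp add: mult_ac)
      finally have "(\<Sum>j\<in>J. (\<Sum>i\<in>I. c (i,j) * f i x) * g j y)
          = (\<Sum>ij\<in>I \<times> J. c ij * (case ij of (i, j) \<Rightarrow> \<lambda>(x, y). f i x * g j y) (x,y))" by simp
      thus "(\<Sum>j\<in>J. (\<Sum>i\<in>I. c (i,j) * f i x) * g j y) = 0" using h x y by auto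
    qed
    from LG[unfolded lind_def, THEN spec[of _ "\<lambda>j. \<Sum>i\<in>I. c (i,j) * f i x"]] this
    show "\<forall>j\<in>J. (\<Sum>i\<in>I. c (i,j) * f i x) = 0" by simp
  qed
  show "\<forall>ij\<in>I \<times> J. c ij = 0"
  proof
    fix ij assume "ij \<in> I \<times> J"
    then obtain i j where ij: "ij = (i,j)" "i \<in> I" "j \<in> J" by auto
    have "\<forall>x\<in>X. (\<Sum>i\<in>I. c (i,j) * f i x) = 0" using h2 ij by auto
    from LF[unfolded lind_def, THEN spec[of _ "\<lambda>i. c (i,j)"]] this
    have "\<forall>i\<in>I. c (i,j) = 0" by simp
    thus "c ij = 0" using ij by auto
  qed
qed

lemma lind3:
  assumes fI: "finite I" and fJ: "finite J" and fK: "finite K"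
    and LF: "lind X I f" and LG: "lind Y J g" and LH: "lind Z K h"
  shows "lind (X \<times> Y \<times> Z) (I \<times> J \<times> K) (\<lambda>(i,j,k) (x,y,z). f i x * g j y * h k z)"
proof -
  have A: "lind (Y \<times> Z) (J \<times> K) (\<lambda>(j,k) (y,z). g j y * h k z)"
    by (rule lind_tensor[OF fJ fK LG LH])
  have B: "lind (X \<times> (Y \<times> Z)) (I \<times> (J \<times> K))
      (\<lambda>(i,jk) (x,yz). f i x * (\<lambda>(j,k) (y,z). g j y * h k z) jk yz)"
    by (rule lind_tensor[OF fI _ LF A]) (use fJ fK in simp)
  show ?thesis
    using B by (subst lind_cong[where g = "\<lambda>(i,jk) (x,yz). f i x * (\<lambda>(j,k) (y,z). g j y * h k z) jk yz"])
      (auto simp: mult_ac)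
qed

lemma lt_mix: "a < n \<Longrightarrow> b < M \<Longrightarrow> a + n * b < n * (M::nat)"
proof -
  assume "a < n" "b < M"
  hence "a + n * b < n + n * b" by simp
  also have "\<dots> = n * (b + 1)" by simp
  also have "\<dots> \<le> n * M" using \<open>b < M\<close> by (intro mult_le_mono2) simp
  finally show ?thesis .
qed

lemma lind_vec3:
  assumes n1: "0 < n1" and n2: "0 < n2"
    and L: "lind X ({1..n1} \<times> {1..n2} \<times> {1..n3}) (\<lambda>(i,j,k). F i j k)"
  shows "lind X {1..n3*n1*n2} (vec3 n1 n2 F)"
proof -
  define \<phi> where "\<phi> = (\<lambda>(i,j,k). (i-1) + n1 * ((j-1) + n2 * (k-1)) + 1)"
  define \<psi> where "\<psi> = (\<lambda>b. ((b-1) mod n1 + 1, (b-1) div n1 mod n2 + 1, (b-1) div (n1*n2) + 1))"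
  let ?T = "{1..n1} \<times> {1..n2} \<times> {1..n3}"
  let ?N = "{1..n3*n1*n2}"
  have psiphi: "\<psi> (\<phi> \<tau>) = \<tau>" if "\<tau> \<in> ?T" for \<tau>
  proof -
    obtain i j k where t0: "\<tau> = (i,j,k)" by (cases \<tau>) auto
    have t: "\<tau> = (i,j,k)" "1 \<le> i" "i \<le> n1" "1 \<le> j" "j \<le> n2" "1 \<le> k" "k \<le> n3"
      using that t0 by auto
    obtain i0 j0 k0 where z: "i = Suc i0" "j = Suc j0" "k = Suc k0"
      using t by (metis Suc_le_D One_nat_def)
    have e: "\<phi> \<tau> - 1 = i0 + n1 * (j0 + n2 * k0)" by (simp add: \<phi>_def t z)
    have m1: "(\<phi> \<tau> - 1) mod n1 = i - 1" using t n1 z unfolding e by simp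
    have d1: "(\<phi> \<tau> - 1) div n1 = j0 + n2 * k0" using t n1 z unfolding e by simp
    have m2: "(j0 + n2 * k0) mod n2 = j - 1" using t z by simp
    have d2: "(j0 + n2 * k0) div n2 = k - 1" using t z by simp
    have d3: "(\<phi> \<tau> - 1) div (n1 * n2) = k - 1" using d1 d2 by (simp add: div_mult2_eq)
    show ?thesis unfolding \<psi>_def using m1 d1 m2 d3 t by simp
  qed
  have phipsi: "\<phi> (\<psi> b) = b" if "b \<in> ?N" for b
  proof -
    have b: "1 \<le> b" using that by simp
    have "b - 1 = (b-1) mod n1 + n1 * ((b-1) div n1)" by simp
    also have "(b-1) div n1 = (b-1) div n1 mod n2 + n2 * ((b-1) div n1 div n2)" by simp
    finally have "b - 1 = (b-1) mod n1 + n1 * ((b-1) div n1 mod n2 + n2 * ((b-1) div (n1 * n2)))"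
      by (simp add: div_mult2_eq)
    thus ?thesis using b unfolding \<phi>_def \<psi>_def by simp
  qed
  have phiN: "\<phi> ` ?T \<subseteq> ?N"
  proof
    fix b assume "b \<in> \<phi> ` ?T"
    then obtain i j k where t: "b = \<phi> (i,j,k)" "1 \<le> i" "i \<le> n1" "1 \<le> j" "j \<le> n2" "1 \<le> k" "k \<le> n3"
      by auto
    have "(j-1) + n2 * (k-1) < n2 * n3" using t by (intro lt_mix) auto
    hence "(i-1) + n1 * ((j-1) + n2 * (k-1)) < n1 * (n2 * n3)" using t by (intro lt_mix) auto
    thus "b \<in> ?N" unfolding t \<phi>_def by (simp add: mult_ac)
  qed
  have psiT: "\<psi> ` ?N \<subseteq> ?T"
  proof
    fix \<tau> assume "\<tau> \<in> \<psi> ` ?N"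
    then obtain b where b: "\<tau> = \<psi> b" "1 \<le> b" "b \<le> n3*n1*n2" by auto
    have "b - 1 < n3 * (n1 * n2)" using b by (simp add: mult_ac)
    hence "(b-1) div (n1*n2) < n3" by (simp add: less_mult_imp_div_less)
    moreover have "Suc ((b-1) mod n1) \<le> n1" by (rule Suc_leI) (use n1 in simp)
    moreover have "Suc ((b-1) div n1 mod n2) \<le> n2" by (rule Suc_leI) (use n2 in simp)
    ultimately show "\<tau> \<in> ?T" using b n1 n2 unfolding \<psi>_def by auto
  qed
  have bij: "bij_betw \<phi> ?T ?N"
    by (rule bij_betw_byWitness[of _ \<psi>]) (use psiphi phipsi phiN psiT in auto)
  have v3: "vec3 n1 n2 F (\<phi> \<tau>) = (\<lambda>(i,j,k). F i j k) \<tau>" if "\<tau> \<in> ?T" for \<tau>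
    using psiphi[OF that] unfolding vec3_def \<psi>_def by (cases \<tau>) auto
  show ?thesis unfolding lind_def
  proof (intro allI impI)
    fix c assume h: "\<forall>x\<in>X. (\<Sum>b\<in>?N. c b * vec3 n1 n2 F b x) = 0"
    have "\<forall>x\<in>X. (\<Sum>\<tau>\<in>?T. c (\<phi> \<tau>) * (\<lambda>(i,j,k). F i j k) \<tau> x) = 0"
    proof
      fix x assume x: "x \<in> X"
      have "(\<Sum>\<tau>\<in>?T. c (\<phi> \<tau>) * (\<lambda>(i,j,k). F i j k) \<tau> x) = (\<Sum>\<tau>\<in>?T. c (\<phi> \<tau>) * vec3 n1 n2 F (\<phi> \<tau>) x)"
        by (rule sum.cong) (auto simp: v3)
      also have "\<dots> = (\<Sum>b\<in>?N. c b * vec3 n1 n2 F b x)"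
        by (rule sum.reindex_bij_betw[OF bij, where g = "\<lambda>b. c b * vec3 n1 n2 F b x"])
      finally show "(\<Sum>\<tau>\<in>?T. c (\<phi> \<tau>) * (\<lambda>(i,j,k). F i j k) \<tau> x) = 0" using h x by simp
    qed
    from L[unfolded lind_def, THEN spec[of _ "\<lambda>\<tau>. c (\<phi> \<tau>)"]] this
    have z: "\<forall>\<tau>\<in>?T. c (\<phi> \<tau>) = 0" by simp
    show "\<forall>b\<in>?N. c b = 0"
    proof
      fix b assume b: "b \<in> ?N"
      have "\<psi> b \<in> ?T" using psiT b by auto
      from z[rule_format, OF this] show "c b = 0" using phipsi[OF b] by simp
    qed
  qed
qed




lemma sum_restrict:
  assumes "finite Z" "finite S" "\<forall>a\<in>Z-S. f a = 0"
  shows "sum f Z = (\<Sum>a\<in>S. if a \<in> Z then f a else 0)"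
proof -
  have "sum f Z = sum f (Z \<inter> S)" by (rule sum.mono_neutral_right) (use assms in auto)
  also have "\<dots> = (\<Sum>a\<in>S. if a \<in> Z then f a else 0)"
    using sum.inter_restrict[OF assms(2), of f Z] by (simp add: Int_commute)
  finally show ?thesis .
qed

lemma sum_single:
  assumes "finite Z" "a0 \<in> Z" "\<forall>a\<in>Z-{a0}. f a = 0"
  shows "sum f Z = f a0"
proof -
  have "sum f Z = f a0 + sum f (Z - {a0})" using assms by (simp add: sum.remove)
  also have "sum f (Z - {a0}) = 0" using assms by simp
  finally show ?thesis by simp
qed

lemma RowInd_vstack_bot:
  assumes V: "RowInd rA K A"
  shows "RowInd (rA + rB) K (vstack rA A zerom)"
  unfolding RowInd_def
proof (intro allI impI)
  fix Z c
  assume Zs: "Z \<subseteq> {1..rA + rB}" and nz: "\<forall>a\<in>Z. \<exists>b\<in>{1..K}. vstack rA A zerom a b \<noteq> 0"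
    and h: "\<forall>b\<in>{1..K}. (\<Sum>a\<in>Z. c a * vstack rA A zerom a b) = 0"
  have Zs2: "Z \<subseteq> {1..rA}"
  proof
    fix a assume a: "a \<in> Z"
    then obtain b where "vstack rA A zerom a b \<noteq> 0" using nz by auto
    hence "a \<le> rA" by (auto simp: vstack_def zerom_def split: if_splits)
    thus "a \<in> {1..rA}" using a Zs by auto
  qed
  have eq: "vstack rA A zerom a b = A a b" if "a \<in> Z" for a b using that Zs2 by (auto simp: vstack_def)
  have "\<forall>a\<in>Z. \<exists>b\<in>{1..K}. A a b \<noteq> 0" using nz eq by auto
  moreover have "\<forall>b\<in>{1..K}. (\<Sum>a\<in>Z. c a * A a b) = 0" using h eq by (simp cong: sum.cong)
  ultimately show "\<forall>a\<in>Z. c a = 0" using V Zs2 unfolding RowInd_def by blast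
qed

lemma RowInd_vstack_top:
  assumes V: "RowInd rB K Bm"
  shows "RowInd (rA + rB) K (vstack rA zerom Bm)"
  unfolding RowInd_def
proof (intro allI impI)
  fix Z c
  assume Zs: "Z \<subseteq> {1..rA + rB}" and nz: "\<forall>a\<in>Z. \<exists>b\<in>{1..K}. vstack rA zerom Bm a b \<noteq> 0"
    and h: "\<forall>b\<in>{1..K}. (\<Sum>a\<in>Z. c a * vstack rA zerom Bm a b) = 0"
  have big: "rA < a" if aZ: "a \<in> Z" for a
  proof -
    obtain b where "vstack rA zerom Bm a b \<noteq> 0" using nz aZ by blast
    thus ?thesis by (auto simp: vstack_def zerom_def split: if_splits)
  qed
  define Z' where "Z' = (\<lambda>a. a - rA) ` Z"
  define c' where "c' a' = c (a' + rA)" for a'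
  have inj: "inj_on (\<lambda>a. a - rA) Z"
  proof (rule inj_onI)
    fix x y assume "x \<in> Z" "y \<in> Z" "x - rA = y - rA"
    thus "x = y" using big[of x] big[of y] by linarith
  qed
  have Z's: "Z' \<subseteq> {1..rB}" unfolding Z'_def using Zs big by force
  have eq: "vstack rA zerom Bm a b = Bm (a - rA) b" if "a \<in> Z" for a b
    using big[OF that] by (auto simp: vstack_def)
  have cc: "c a = c' (a - rA)" if "a \<in> Z" for a using big[OF that] by (simp add: c'_def)
  have "\<forall>a'\<in>Z'. \<exists>b\<in>{1..K}. Bm a' b \<noteq> 0" using nz eq unfolding Z'_def by auto
  moreover have "\<forall>b\<in>{1..K}. (\<Sum>a'\<in>Z'. c' a' * Bm a' b) = 0"
  proof
    fix b assume b: "b \<in> {1..K}"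
    have "(\<Sum>a'\<in>Z'. c' a' * Bm a' b) = (\<Sum>a\<in>Z. c' (a - rA) * Bm (a - rA) b)"
      unfolding Z'_def by (rule sum.reindex[OF inj, unfolded comp_def])
    also have "\<dots> = (\<Sum>a\<in>Z. c a * vstack rA zerom Bm a b)"
      by (rule sum.cong) (auto simp: eq cc)
    finally show "(\<Sum>a'\<in>Z'. c' a' * Bm a' b) = 0" using h b by simp
  qed
  ultimately have "\<forall>a'\<in>Z'. c' a' = 0" using V Z's unfolding RowInd_def by blast
  thus "\<forall>a\<in>Z. c a = 0" using cc unfolding Z'_def by auto
qed

lemma RowInd_kron:
  assumes rB: "0 < rB" and cB: "0 < cB" and V: "RowInd rB cB V"
  shows "RowInd (nt*rB) (nt*cB) (kron rB cB idm V)"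
  unfolding RowInd_def
proof (intro allI impI ballI)
  fix Z c a0
  assume Zs: "Z \<subseteq> {1..nt*rB}" and nz: "\<forall>a\<in>Z. \<exists>b\<in>{1..nt*cB}. kron rB cB idm V a b \<noteq> 0"
    and h: "\<forall>b\<in>{1..nt*cB}. (\<Sum>a\<in>Z. c a * kron rB cB idm V a b) = 0" and a0: "a0 \<in> Z"
  have finZ: "finite Z" using Zs finite_subset by blast
  define k0 where "k0 = (a0 - 1) div rB"
  define g where "g a' = k0 * rB + a'" for a'
  define Z' where "Z' = {a' \<in> {1..rB}. g a' \<in> Z}"
  have a0b: "1 \<le> a0" "a0 \<le> nt * rB" using a0 Zs by auto
  have k0nt: "k0 < nt" unfolding k0_def using a0b rB
    by (simp add: less_mult_imp_div_less mult.commute)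
  have ga0: "g ((a0-1) mod rB + 1) = a0" unfolding g_def k0_def using a0b
    by (metis add.commute add_Suc_right diff_Suc_1 mod_div_mult_eq Suc_pred' One_nat_def less_eq_Suc_le plus_1_eq_Suc)
  have a0Z': "(a0-1) mod rB + 1 \<in> Z'" unfolding Z'_def using ga0 a0 rB
    by (simp add: Suc_leI)
  have gdiv: "(g a' - 1) div rB = k0" "(g a' - 1) mod rB + 1 = a'" if A: "a' \<in> {1..rB}" for a'
  proof -
    obtain z where z: "a' = Suc z" using A by (cases a') auto
    have e: "g a' - 1 = z + rB * k0" using z unfolding g_def by (simp add: mult.commute)
    have zr: "z < rB" using A z by simp
    show "(g a' - 1) div rB = k0" "(g a' - 1) mod rB + 1 = a'" unfolding e using zr z by auto
  qed
  have bdiv: "(k0 * cB + b' - 1) div cB = k0" "(k0 * cB + b' - 1) mod cB + 1 = b'" if A: "b' \<in> {1..cB}" for b'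
  proof -
    obtain z where z: "b' = Suc z" using A by (cases b') auto
    have e: "k0 * cB + b' - 1 = z + cB * k0" using z by (simp add: mult.commute)
    have zr: "z < cB" using A z by simp
    show "(k0 * cB + b' - 1) div cB = k0" "(k0 * cB + b' - 1) mod cB + 1 = b'" unfolding e using zr z by auto
  qed
  have binr: "k0 * cB + b' \<in> {1..nt*cB}" if "b' \<in> {1..cB}" for b'
  proof -
    have "k0 * cB + b' \<le> k0 * cB + cB" using that by simp
    also have "\<dots> = (k0 + 1) * cB" by simp
    also have "\<dots> \<le> nt * cB" using k0nt by (intro mult_le_mono1) simp
    finally show ?thesis using that by simp
  qed
  have kr: "kron rB cB idm V (g a') (k0 * cB + b') = V a' b'" if "a' \<in> {1..rB}" "b' \<in> {1..cB}" for a' b'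
    unfolding kron_def using gdiv[OF that(1)] bdiv[OF that(2)] by (simp add: idm_def)
  have Z's: "Z' \<subseteq> {1..rB}" unfolding Z'_def by auto
  have nz': "\<forall>a'\<in>Z'. \<exists>b'\<in>{1..cB}. V a' b' \<noteq> 0"
  proof
    fix a' assume a': "a' \<in> Z'"
    hence a'r: "a' \<in> {1..rB}" "g a' \<in> Z" unfolding Z'_def by auto
    then obtain b where b: "b \<in> {1..nt*cB}" "kron rB cB idm V (g a') b \<noteq> 0" using nz by blast
    hence "V ((g a' - 1) mod rB + 1) ((b - 1) mod cB + 1) \<noteq> 0" unfolding kron_def by simp
    hence "V a' ((b - 1) mod cB + 1) \<noteq> 0" using gdiv[OF a'r(1)] by simp
    moreover have "(b - 1) mod cB + 1 \<in> {1..cB}" using cB by (simp add: Suc_leI)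
    ultimately show "\<exists>b'\<in>{1..cB}. V a' b' \<noteq> 0" by blast
  qed
  have inj: "inj_on g Z'" unfolding g_def by (auto intro: inj_onI)
  have gZ': "g ` Z' \<subseteq> Z" unfolding Z'_def by auto
  have h': "\<forall>b'\<in>{1..cB}. (\<Sum>a'\<in>Z'. c (g a') * V a' b') = 0"
  proof
    fix b' assume b': "b' \<in> {1..cB}"
    have zero_out: "\<forall>a\<in>Z - g ` Z'. c a * kron rB cB idm V a (k0 * cB + b') = 0"
    proof
      fix a assume a: "a \<in> Z - g ` Z'"
      have a1: "1 \<le> a" using a Zs by auto
      have "(a - 1) div rB \<noteq> k0"
      proof
        assume dk: "(a - 1) div rB = k0"
        have "g ((a-1) mod rB + 1) = a" unfolding g_def dk[symmetric] using a1
          by (metis add.commute add_Suc_right diff_Suc_1 mod_div_mult_eq Suc_pred' One_nat_def less_eq_Suc_le plus_1_eq_Suc)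
        moreover have "(a-1) mod rB + 1 \<in> {1..rB}" using rB by (simp add: Suc_leI)
        ultimately have "a \<in> g ` Z'" using a unfolding Z'_def by (metis (mono_tags, lifting) DiffD1 image_eqI mem_Collect_eq)
        thus False using a by simp
      qed
      thus "c a * kron rB cB idm V a (k0 * cB + b') = 0"
        unfolding kron_def using bdiv[OF b'] by (simp add: idm_def)
    qed
    have "(\<Sum>a'\<in>Z'. c (g a') * V a' b') = (\<Sum>a'\<in>Z'. c (g a') * kron rB cB idm V (g a') (k0 * cB + b'))"
      by (rule sum.cong) (use kr b' Z's in auto)
    also have "\<dots> = (\<Sum>a\<in>g ` Z'. c a * kron rB cB idm V a (k0 * cB + b'))"
      by (rule sum.reindex[OF inj, unfolded comp_def, symmetric])
    also have "\<dots> = (\<Sum>a\<in>Z. c a * kron rB cB idm V a (k0 * cB + b'))"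
      by (rule sum.mono_neutral_left[OF finZ gZ' zero_out])
    also have "\<dots> = 0" using h binr[OF b'] by blast
    finally show "(\<Sum>a'\<in>Z'. c (g a') * V a' b') = 0" .
  qed
  have "c (g ((a0-1) mod rB + 1)) = 0"
    using V[unfolded RowInd_def, rule_format, of Z' "\<lambda>a'. c (g a')"] Z's nz' h' a0Z' by blast
  thus "c a0 = 0" using ga0 by simp
qed




lemma idx_uniq:
  fixes nr i i' j j' :: nat
  assumes "0 < nr" "1 \<le> i" "i \<le> nr" "1 \<le> i'" "i' \<le> nr" "1 \<le> j" "1 \<le> j'"
    and eq: "i + (j - 1) * nr = i' + (j' - 1) * nr"
  shows "i = i' \<and> j = j'"
proof -
  obtain x y x' y' where z: "i = Suc x" "j = Suc y" "i' = Suc x'" "j' = Suc y'"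
    using assms by (metis Suc_le_D One_nat_def)
  have e: "x + nr * y = x' + nr * y'" using eq z by (simp add: mult.commute)
  have "x < nr" "x' < nr" using assms z by auto
  hence "(x + nr * y) mod nr = x" "(x' + nr * y') mod nr = x'"
        "(x + nr * y) div nr = y" "(x' + nr * y') div nr = y'" by auto
  thus ?thesis using e z by metis
qed

lemma col_ge: "3 \<le> j \<Longrightarrow> 1 \<le> i \<Longrightarrow> 2 * nr < i + (j - 1) * (nr::nat)"
proof -
  assume "3 \<le> j" "1 \<le> i"
  hence "2 \<le> j - 1" by simp
  have m: "2 * nr \<le> (j - 1) * nr" by (rule mult_le_mono1) fact
  show ?thesis using m \<open>1 \<le> i\<close> by linarith
qed

lemma col_ge2: "2 \<le> j \<Longrightarrow> 1 \<le> i \<Longrightarrow> nr < i + (j - 1) * (nr::nat)"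
proof -
  assume "2 \<le> j" "1 \<le> i"
  hence "1 \<le> j - 1" by simp
  have m: "1 * nr \<le> (j - 1) * nr" by (rule mult_le_mono1) fact
  show ?thesis using m \<open>1 \<le> i\<close> by linarith
qed

lemma col_le: "i \<le> nr \<Longrightarrow> j \<le> n \<Longrightarrow> 1 \<le> j \<Longrightarrow> i + (j - 1) * nr \<le> n * (nr::nat)"
proof -
  assume "i \<le> nr" "j \<le> n" "1 \<le> j"
  hence "i + (j - 1) * nr \<le> nr + (n - 1) * nr" by (intro add_mono mult_le_mono1) auto
  also have "\<dots> \<le> n * nr" using \<open>j \<le> n\<close> \<open>1 \<le> j\<close> by (cases n) auto
  finally show ?thesis by (simp add: mult.commute)
qed

context
  fixes nr ns :: nat
  assumes nr3: "3 \<le> nr" and ns2: "2 \<le> ns"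
begin

lemma two_nr: "2 * nr \<le> nr * ns"
  using ns2 by (simp add: mult.commute)

lemma RowInd_E10: "RowInd (nbar1 nr ns) (nr*ns) (E10 nr ns)"
  unfolding RowInd_def
proof (intro allI impI ballI)
  fix Z c a0
  assume Zs: "Z \<subseteq> {1..nbar1 nr ns}" and nz: "\<forall>a\<in>Z. \<exists>b\<in>{1..nr*ns}. E10 nr ns a b \<noteq> 0"
    and h: "\<forall>b\<in>{1..nr*ns}. (\<Sum>a\<in>Z. c a * E10 nr ns a b) = 0" and a0: "a0 \<in> Z"
  have finZ: "finite Z" using Zs finite_subset by blast
  show "c a0 = 0"
  proof (cases "a0 \<in> {1,2}")
    case True
    define cz where "cz a = (if a \<in> Z then c a else 0)" for a
    have "\<forall>i\<in>{1..nr}. cz 1 * (Ebar_e nr 2 (i+1) 2 - Ebar_e nr 2 i 2)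
                      + cz 2 * (Ebar_e nr 3 (i+1) 2 - Ebar_e nr 3 i 2) = 0"
    proof
      fix i assume i: "i \<in> {1..nr}"
      define b where "b = nr + i"
      have bb: "nr + i \<le> 2 * nr" using i by simp
      have "nr + i \<le> nr * ns" using bb two_nr by linarith
      hence b: "b \<in> {1..nr*ns}" using i by (simp add: b_def)
      have z: "\<forall>a\<in>Z-{1,2}. c a * E10 nr ns a b = 0"
      proof
        fix a assume a: "a \<in> Z - {1,2}"
        have "\<not> (\<exists>j i. 3 \<le> j \<and> j \<le> ns \<and> 1 \<le> i \<and> i \<le> nr \<and>
                      a = 2 + i + (2 * j - 5) * nr \<and> b = i + (j - 1) * nr)"
        proof
          assume "\<exists>j i. 3 \<le> j \<and> j \<le> ns \<and> 1 \<le> i \<and> i \<le> nr \<and>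
                      a = 2 + i + (2 * j - 5) * nr \<and> b = i + (j - 1) * nr"
          then obtain j' i' where "3 \<le> j'" "1 \<le> i'" "b = i' + (j' - 1) * nr" by blast
          with col_ge[of j' i' nr] have "2 * nr < b" by simp
          thus False using bb by (simp add: b_def)
        qed
        thus "c a * E10 nr ns a b = 0" using a unfolding E10_def by auto
      qed
      have "(\<Sum>a\<in>Z. c a * E10 nr ns a b) = (\<Sum>a\<in>{1,2}. if a \<in> Z then c a * E10 nr ns a b else 0)"
        by (rule sum_restrict[OF finZ _ z]) simp
      also have "\<dots> = cz 1 * E10 nr ns 1 b + cz 2 * E10 nr ns 2 b" by (simp add: cz_def)
      also have "E10 nr ns 1 b = Ebar_e nr 2 (i+1) 2 - Ebar_e nr 2 i 2"
        using i unfolding E10_def b_def by (simp add: numeral_2_eq_2 numeral_3_eq_3)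
      also have "E10 nr ns 2 b = Ebar_e nr 3 (i+1) 2 - Ebar_e nr 3 i 2"
        using i unfolding E10_def b_def by (simp add: numeral_2_eq_2 numeral_3_eq_3)
      finally show "cz 1 * (Ebar_e nr 2 (i+1) 2 - Ebar_e nr 2 i 2)
                      + cz 2 * (Ebar_e nr 3 (i+1) 2 - Ebar_e nr 3 i 2) = 0" using h b by simp
    qed
    from T1[OF nr3 this] have "cz 1 = 0" "cz 2 = 0" by auto
    thus ?thesis using True a0 by (auto simp: cz_def)
  next
    case False
    obtain b where "b \<in> {1..nr*ns}" "E10 nr ns a0 b \<noteq> 0" using nz a0 by blast
    then obtain j i where ji: "3 \<le> j" "j \<le> ns" "1 \<le> i" "i \<le> nr"
      "a0 = 2 + i + (2 * j - 5) * nr" "b = i + (j - 1) * nr"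
      using False unfolding E10_def by (auto split: if_splits)
    define b0 where "b0 = i + (j - 1) * nr"
    have b0: "b0 \<in> {1..nr*ns}" using ji col_le[of i nr j ns] by (auto simp: b0_def mult.commute)
    have z: "\<forall>a\<in>Z-{a0}. c a * E10 nr ns a b0 = 0"
    proof
      fix a assume a: "a \<in> Z - {a0}"
      have big: "2 * nr < b0" unfolding b0_def using col_ge ji by simp
      show "c a * E10 nr ns a b0 = 0"
      proof (cases "a \<in> {1,2}")
        case True thus ?thesis using big unfolding E10_def by auto
      next
        case False
        have "\<not> (\<exists>j' i'. 3 \<le> j' \<and> j' \<le> ns \<and> 1 \<le> i' \<and> i' \<le> nr \<and>
                      a = 2 + i' + (2 * j' - 5) * nr \<and> b0 = i' + (j' - 1) * nr)"
        proof
          assume "\<exists>j' i'. 3 \<le> j' \<and> j' \<le> ns \<and> 1 \<le> i' \<and> i' \<le> nr \<and>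
                      a = 2 + i' + (2 * j' - 5) * nr \<and> b0 = i' + (j' - 1) * nr"
          then obtain j' i' where "3 \<le> j'" "1 \<le> i'" "i' \<le> nr"
            "a = 2 + i' + (2 * j' - 5) * nr" "b0 = i' + (j' - 1) * nr" by blast
          moreover have "i' = i \<and> j' = j"
            using idx_uniq[of nr i' i j' j] calculation ji nr3 by (simp add: b0_def)
          ultimately have "a = a0" using ji by simp
          thus False using a by simp
        qed
        thus ?thesis using False unfolding E10_def by auto
      qed
    qed
    have "(\<Sum>a\<in>Z. c a * E10 nr ns a b0) = c a0 * E10 nr ns a0 b0"
      by (rule sum_single[OF finZ a0 z])
    moreover have "E10 nr ns a0 b0 = 1"
      using False ji unfolding E10_def b0_def by auto
    ultimately show ?thesis using h b0 by simp
  qed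
qed

lemma RowInd_E01: "RowInd (nbar1 nr ns) (nr*(ns-1)) (E01 nr ns)"
  unfolding RowInd_def
proof (intro allI impI ballI)
  fix Z c a0
  assume Zs: "Z \<subseteq> {1..nbar1 nr ns}" and nz: "\<forall>a\<in>Z. \<exists>b\<in>{1..nr*(ns-1)}. E01 nr ns a b \<noteq> 0"
    and h: "\<forall>b\<in>{1..nr*(ns-1)}. (\<Sum>a\<in>Z. c a * E01 nr ns a b) = 0" and a0: "a0 \<in> Z"
  have finZ: "finite Z" using Zs finite_subset by blast
  show "c a0 = 0"
  proof (cases "a0 \<in> {1,2}")
    case True
    define cz where "cz a = (if a \<in> Z then c a else 0)" for a
    have "\<forall>i\<in>{1..nr}. cz 1 * (Ebar_e nr 2 i 2 - Ebar_e nr 2 i 1)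
                      + cz 2 * (Ebar_e nr 3 i 2 - Ebar_e nr 3 i 1) = 0"
    proof
      fix i assume i: "i \<in> {1..nr}"
      have b: "i \<in> {1..nr*(ns-1)}" using i ns2 by (auto simp: Suc_le_eq intro: order.trans[of _ nr])
      have z: "\<forall>a\<in>Z-{1,2}. c a * E01 nr ns a i = 0"
      proof
        fix a assume a: "a \<in> Z - {1,2}"
        have "\<not> (\<exists>j i'. 2 \<le> j \<and> j \<le> ns - 1 \<and> 1 \<le> i' \<and> i' \<le> nr \<and>
                      a = 2 + i' + (2 * j - 4) * nr \<and> i = i' + (j - 1) * nr)"
        proof
          assume "\<exists>j i'. 2 \<le> j \<and> j \<le> ns - 1 \<and> 1 \<le> i' \<and> i' \<le> nr \<and>
                      a = 2 + i' + (2 * j - 4) * nr \<and> i = i' + (j - 1) * nr"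
          then obtain j' i' where "2 \<le> j'" "1 \<le> i'" "i = i' + (j' - 1) * nr" by blast
          with col_ge2[of j' i' nr] have "nr < i" by simp
          thus False using i by simp
        qed
        thus "c a * E01 nr ns a i = 0" using a unfolding E01_def by auto
      qed
      have "(\<Sum>a\<in>Z. c a * E01 nr ns a i) = (\<Sum>a\<in>{1,2}. if a \<in> Z then c a * E01 nr ns a i else 0)"
        by (rule sum_restrict[OF finZ _ z]) simp
      also have "\<dots> = cz 1 * E01 nr ns 1 i + cz 2 * E01 nr ns 2 i" by (simp add: cz_def)
      also have "E01 nr ns 1 i = Ebar_e nr 2 i 2 - Ebar_e nr 2 i 1"
        using i unfolding E01_def by (simp add: numeral_2_eq_2 numeral_3_eq_3)
      also have "E01 nr ns 2 i = Ebar_e nr 3 i 2 - Ebar_e nr 3 i 1"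
        using i unfolding E01_def by (simp add: numeral_2_eq_2 numeral_3_eq_3)
      finally show "cz 1 * (Ebar_e nr 2 i 2 - Ebar_e nr 2 i 1)
                      + cz 2 * (Ebar_e nr 3 i 2 - Ebar_e nr 3 i 1) = 0" using h b by simp
    qed
    from T2[OF nr3 this] have "cz 1 = 0" "cz 2 = 0" by auto
    thus ?thesis using True a0 by (auto simp: cz_def)
  next
    case False
    obtain b where "b \<in> {1..nr*(ns-1)}" "E01 nr ns a0 b \<noteq> 0" using nz a0 by blast
    then obtain j i where ji: "2 \<le> j" "j \<le> ns - 1" "1 \<le> i" "i \<le> nr"
      "a0 = 2 + i + (2 * j - 4) * nr" "b = i + (j - 1) * nr"
      using False unfolding E01_def by (auto split: if_splits)
    define b0 where "b0 = i + (j - 1) * nr"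
    have b0: "b0 \<in> {1..nr*(ns-1)}" using ji col_le[of i nr j "ns-1"] by (auto simp: b0_def mult.commute)
    have z: "\<forall>a\<in>Z-{a0}. c a * E01 nr ns a b0 = 0"
    proof
      fix a assume a: "a \<in> Z - {a0}"
      have big: "nr < b0" unfolding b0_def using col_ge2 ji by simp
      show "c a * E01 nr ns a b0 = 0"
      proof (cases "a \<in> {1,2}")
        case True thus ?thesis using big unfolding E01_def by auto
      next
        case False
        have "\<not> (\<exists>j' i'. 2 \<le> j' \<and> j' \<le> ns - 1 \<and> 1 \<le> i' \<and> i' \<le> nr \<and>
                      a = 2 + i' + (2 * j' - 4) * nr \<and> b0 = i' + (j' - 1) * nr)"
        proof
          assume "\<exists>j' i'. 2 \<le> j' \<and> j' \<le> ns - 1 \<and> 1 \<le> i' \<and> i' \<le> nr \<and>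
                      a = 2 + i' + (2 * j' - 4) * nr \<and> b0 = i' + (j' - 1) * nr"
          then obtain j' i' where "2 \<le> j'" "1 \<le> i'" "i' \<le> nr"
            "a = 2 + i' + (2 * j' - 4) * nr" "b0 = i' + (j' - 1) * nr" by blast
          moreover have "i' = i \<and> j' = j"
            using idx_uniq[of nr i' i j' j] calculation ji nr3 by (simp add: b0_def)
          ultimately have "a = a0" using ji by simp
          thus False using a by simp
        qed
        thus ?thesis using False unfolding E01_def by auto
      qed
    qed
    have "(\<Sum>a\<in>Z. c a * E01 nr ns a b0) = c a0 * E01 nr ns a0 b0"
      by (rule sum_single[OF finZ a0 z])
    moreover have "E01 nr ns a0 b0 = 1"
      using False ji unfolding E01_def b0_def by auto
    ultimately show ?thesis using h b0 by simp
  qed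
qed

lemma RowInd_E0: "RowInd (nbar0 nr ns) (nr*ns) (E0 nr)"
  unfolding RowInd_def
proof (intro allI impI ballI)
  fix Z c a0
  assume Zs: "Z \<subseteq> {1..nbar0 nr ns}"
    and h: "\<forall>b\<in>{1..nr*ns}. (\<Sum>a\<in>Z. c a * E0 nr a b) = 0" and a0: "a0 \<in> Z"
  have finZ: "finite Z" using Zs finite_subset by blast
  show "c a0 = 0"
  proof (cases "a0 \<le> 3")
    case True
    define cz where "cz a = (if a \<in> Z then c a else 0)" for a
    have "\<forall>b\<in>{1..2*nr}. cz 1 * Ebar nr 1 b + cz 2 * Ebar nr 2 b + cz 3 * Ebar nr 3 b = 0"
    proof
      fix b assume b: "b \<in> {1..2*nr}"
      have bb: "1 \<le> b" "b \<le> 2 * nr" using b by auto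
      have b': "b \<in> {1..nr*ns}" using bb two_nr unfolding atLeastAtMost_iff by linarith
      have z: "\<forall>a\<in>Z-{1,2,3}. c a * E0 nr a b = 0"
      proof
        fix a assume a: "a \<in> Z - {1,2,3}"
        have "3 < a" using a Zs by auto
        thus "c a * E0 nr a b = 0" using b unfolding E0_def by auto
      qed
      have "(\<Sum>a\<in>Z. c a * E0 nr a b) = (\<Sum>a\<in>{1,2,3}. if a \<in> Z then c a * E0 nr a b else 0)"
        by (rule sum_restrict[OF finZ _ z]) simp
      also have "\<dots> = cz 1 * E0 nr 1 b + cz 2 * E0 nr 2 b + cz 3 * E0 nr 3 b" by (simp add: cz_def)
      also have "\<dots> = cz 1 * Ebar nr 1 b + cz 2 * Ebar nr 2 b + cz 3 * Ebar nr 3 b"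
        using b unfolding E0_def by simp
      finally show "cz 1 * Ebar nr 1 b + cz 2 * Ebar nr 2 b + cz 3 * Ebar nr 3 b = 0" using h b' by simp
    qed
    from T3[OF nr3 this] have "cz 1 = 0" "cz 2 = 0" "cz 3 = 0" by auto
    moreover have "a0 \<in> {1,2,3}" using True a0 Zs by auto
    ultimately show ?thesis using a0 by (auto simp: cz_def)
  next
    case False
    define b0 where "b0 = a0 - 3 + 2 * nr"
    have "a0 \<le> nr * (ns - 2) + 3" using a0 Zs by (auto simp: nbar0_def)
    moreover have "nr * (ns - 2) + 2 * nr = nr * ns"
      using ns2 by (simp add: diff_mult_distrib2 mult.commute)
    ultimately have b0: "b0 \<in> {1..nr*ns}" using False nr3 by (auto simp: b0_def)
    have z: "\<forall>a\<in>Z-{a0}. c a * E0 nr a b0 = 0"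
    proof
      fix a assume a: "a \<in> Z - {a0}"
      show "c a * E0 nr a b0 = 0"
        using a False unfolding E0_def b0_def idm_def by auto
    qed
    have "(\<Sum>a\<in>Z. c a * E0 nr a b0) = c a0 * E0 nr a0 b0"
      by (rule sum_single[OF finZ a0 z])
    moreover have "E0 nr a0 b0 = 1"
      using False unfolding E0_def b0_def idm_def by auto
    ultimately show ?thesis using h b0 by simp
  qed
qed

end




lemma bspl_lind: "open_C1_knots t p m a b \<Longrightarrow> lind {a..b} {1..m} (bspl t p)"
  unfolding lind_def using bspl_open_indep by blast

lemma dspl_lind: "open_C1_knots t p m a b \<Longrightarrow> lind {a..b} {1..m-1} (dspl t p)"
  unfolding lind_def using dspl_open_indep by blast

context
  fixes t p m a b
  assumes K: "open_C1_knots t p m a b" and m3: "3 \<le> m"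
begin

lemma per_B_lind: "lind {a..b} {1..m-2} (per_B t p m)"
  unfolding lind_def
proof (intro allI impI ballI)
  fix c i0
  assume h: "\<forall>x\<in>{a..b}. (\<Sum>i=1..m-2. c i * per_B t p m i x) = 0" and i0: "i0 \<in> {1..m-2}"
  define d where "d l = (\<Sum>i=1..m-2. c i * H0 t p m i l)" for l
  have "\<forall>x\<in>{a..b}. (\<Sum>l=1..m. d l * bspl t p l x) = 0"
  proof
    fix x assume x: "x \<in> {a..b}"
    have "(\<Sum>l=1..m. d l * bspl t p l x) = (\<Sum>i=1..m-2. c i * per_B t p m i x)"
      unfolding d_def per_B_def sum_distrib_left sum_distrib_right
      by (subst sum.swap) (simp add: mult_ac)
    thus "(\<Sum>l=1..m. d l * bspl t p l x) = 0" using h x by simp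
  qed
  from bspl_open_indep[OF K this] have dz: "\<forall>l\<in>{1..m}. d l = 0" .
  have "d (i0+1) = (\<Sum>i=1..m-2. c i * (if i0 = i then 1 else 0))"
    unfolding d_def using i0 by (intro sum.cong) (auto simp: H0_def)
  also have "\<dots> = c i0" using i0 by (simp add: if_distrib cong: if_cong)
  finally show "c i0 = 0" using dz i0 by auto
qed

lemma per_c2_pos: "per_c2 t p m > 0"
proof -
  have n: "kn t (p+2) - kn t 1 > 0" using K_first[OF K] by simp
  have "kn t m \<le> kn t (m+p+1)"
    using kn_mono[OF K_basic(3)[OF K]] K_basic(2)[OF K] m3 by simp
  thus ?thesis using n unfolding per_c2_def by (simp add: divide_pos_pos)
qed

lemma per_D_lind: "lind {a..b} {1..m-2} (per_D t p m)"
  unfolding lind_def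
proof (intro allI impI ballI)
  fix c i0
  assume h: "\<forall>x\<in>{a..b}. (\<Sum>i=1..m-2. c i * per_D t p m i x) = 0" and i0: "i0 \<in> {1..m-2}"
  define d where "d l = (\<Sum>i=1..m-2. c i * H1 t p m i l)" for l
  have "\<forall>x\<in>{a..b}. (\<Sum>l=1..m-1. d l * dspl t p l x) = 0"
  proof
    fix x assume x: "x \<in> {a..b}"
    have "(\<Sum>l=1..m-1. d l * dspl t p l x) = (\<Sum>i=1..m-2. c i * per_D t p m i x)"
      unfolding d_def per_D_def sum_distrib_left sum_distrib_right
      by (subst sum.swap) (simp add: mult_ac)
    thus "(\<Sum>l=1..m-1. d l * dspl t p l x) = 0" using h x by simp
  qed
  from dspl_open_indep[OF K this] have dz: "\<forall>l\<in>{1..m-1}. d l = 0" .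
  show "c i0 = 0"
  proof (cases "i0 = m - 2")
    case False
    have "d (i0+1) = (\<Sum>i=1..m-2. c i * (if i0 = i then 1 else 0))"
      unfolding d_def using i0 False by (intro sum.cong) (auto simp: H1_def)
    also have "\<dots> = c i0" using i0 by (simp add: if_distrib cong: if_cong)
    finally show "c i0 = 0" using dz i0 by auto
  next
    case True
    have "d 1 = (\<Sum>i=1..m-2. c i * (if i = m - 2 then per_c2 t p m else 0))"
      unfolding d_def by (intro sum.cong) (auto simp: H1_def)
    also have "\<dots> = c (m-2) * per_c2 t p m" using m3 by (simp add: if_distrib cong: if_cong)
    finally have "c (m-2) * per_c2 t p m = 0" using dz m3 by auto
    thus "c i0 = 0" using per_c2_pos True by simp
  qed
qed

end




theorem proposition3p2:
  fixes tr ts tt :: "real list" and pr ps pt mr ns mt :: nat and R S T :: real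
  assumes knots_r: "open_C1_knots tr pr mr 0 R"
      and knots_s: "open_C1_knots ts ps ns 0 S"
      and knots_t: "open_C1_knots tt pt mt 0 T"
      and nr_ge: "mr - 2 \<ge> 3"
      and nt_ge: "mt - 2 \<ge> 2"
      and ns_ge: "ns \<ge> 2"
  defines "nr \<equiv> mr - 2"
      and "nt \<equiv> mt - 2"
      and "n1 \<equiv> (mt - 2) * (nbar0 (mr - 2) ns + nbar1 (mr - 2) ns)"
      and "\<Omega> \<equiv> {0..R} \<times> {0..S} \<times> {0..T}"
  defines "B100 \<equiv> vec3 nr ns (\<lambda>i j k (r, s, t).
              per_D tr pr mr i r * bspl ts ps j s * per_B tt pt mt k t)"
      and "B010 \<equiv> vec3 nr (ns - 1) (\<lambda>i j k (r, s, t).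
              per_B tr pr mr i r * dspl ts ps j s * per_B tt pt mt k t)"
      and "B001 \<equiv> vec3 nr ns (\<lambda>i j k (r, s, t).
              per_B tr pr mr i r * bspl ts ps j s * per_D tt pt mt k t)"
  shows "nonzero_lin_indep \<Omega> n1 (matfun (nt * nr * ns) (E100 nr ns) B100)
       \<and> nonzero_lin_indep \<Omega> n1 (matfun (nt * nr * (ns - 1)) (E010 nr ns) B010)
       \<and> nonzero_lin_indep \<Omega> n1 (matfun (nt * nr * ns) (E001 nr ns) B001)"
proof -
  have mr3: "3 \<le> mr" and mt3: "3 \<le> mt" using nr_ge nt_ge by auto
  have nr3: "3 \<le> nr" and nt2: "2 \<le> nt" using nr_ge nt_ge by (auto simp: nr_def nt_def)
  have n1_eq: "n1 = nt * (nbar1 nr ns + nbar0 nr ns)" by (simp add: n1_def nt_def nr_def add.commute)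
  have Om: "\<Omega> = {0..R} \<times> {0..S} \<times> {0..T}" by (simp add: \<Omega>_def)
  have LrB: "lind {0..R} {1..nr} (per_B tr pr mr)" unfolding nr_def by (rule per_B_lind[OF knots_r mr3])
  have LrD: "lind {0..R} {1..nr} (per_D tr pr mr)" unfolding nr_def by (rule per_D_lind[OF knots_r mr3])
  have LtB: "lind {0..T} {1..nt} (per_B tt pt mt)" unfolding nt_def by (rule per_B_lind[OF knots_t mt3])
  have LtD: "lind {0..T} {1..nt} (per_D tt pt mt)" unfolding nt_def by (rule per_D_lind[OF knots_t mt3])
  have ns3: "3 \<le> ns \<or> ns = 2" using ns_ge by auto
  have LsB: "lind {0..S} {1..ns} (bspl ts ps)"
    by (rule bspl_lind[OF knots_s])
  have LsD: "lind {0..S} {1..ns-1} (dspl ts ps)"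
    by (rule dspl_lind[OF knots_s])
  have nr0: "0 < nr" using nr3 by simp
  have rB0: "0 < nbar1 nr ns + nbar0 nr ns" by (simp add: nbar0_def)
  have L1: "lind \<Omega> {1..nt*nr*ns} B100"
    unfolding B100_def
  proof (rule lind_vec3[OF nr0])
    show "0 < ns" using ns_ge by simp
    have "lind ({0..R} \<times> {0..S} \<times> {0..T}) ({1..nr} \<times> {1..ns} \<times> {1..nt})
        (\<lambda>(i,j,k) (x,y,z). per_D tr pr mr i x * bspl ts ps j y * per_B tt pt mt k z)"
      by (rule lind3[OF _ _ _ LrD LsB LtB]) simp_all
    thus "lind \<Omega> ({1..nr} \<times> {1..ns} \<times> {1..nt}) (\<lambda>(i, j, k).
       (\<lambda>i j k (r, s, t). per_D tr pr mr i r * bspl ts ps j s * per_B tt pt mt k t) i j k)"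
      unfolding Om by (subst lind_cong) (auto simp: case_prod_beta)
  qed
  have R1: "RowInd n1 (nt*nr*ns) (E100 nr ns)"
  proof -
    have "RowInd (nt * (nbar1 nr ns + nbar0 nr ns)) (nt * (nr * ns))
            (kron (nbar1 nr ns + nbar0 nr ns) (nr * ns) idm (vstack (nbar1 nr ns) (E10 nr ns) zerom))"
      by (rule RowInd_kron[OF rB0]) (use nr0 ns_ge RowInd_vstack_bot[OF RowInd_E10[OF nr3 ns_ge]] in auto)
    thus ?thesis unfolding n1_eq E100_def by (simp add: mult.assoc)
  qed
  have L2: "lind \<Omega> {1..nt*nr*(ns-1)} B010"
    unfolding B010_def
  proof (rule lind_vec3[OF nr0])
    show "0 < ns - 1" using ns_ge by simp
    have "lind ({0..R} \<times> {0..S} \<times> {0..T}) ({1..nr} \<times> {1..ns-1} \<times> {1..nt})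
        (\<lambda>(i,j,k) (x,y,z). per_B tr pr mr i x * dspl ts ps j y * per_B tt pt mt k z)"
      by (rule lind3[OF _ _ _ LrB LsD LtB]) simp_all
    thus "lind \<Omega> ({1..nr} \<times> {1..ns-1} \<times> {1..nt}) (\<lambda>(i, j, k).
       (\<lambda>i j k (r, s, t). per_B tr pr mr i r * dspl ts ps j s * per_B tt pt mt k t) i j k)"
      unfolding Om by (subst lind_cong) (auto simp: case_prod_beta)
  qed
  have R2: "RowInd n1 (nt*nr*(ns-1)) (E010 nr ns)"
  proof -
    have "RowInd (nt * (nbar1 nr ns + nbar0 nr ns)) (nt * (nr * (ns-1)))
            (kron (nbar1 nr ns + nbar0 nr ns) (nr * (ns-1)) idm (vstack (nbar1 nr ns) (E01 nr ns) zerom))"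
      by (rule RowInd_kron[OF rB0]) (use nr0 ns_ge RowInd_vstack_bot[OF RowInd_E01[OF nr3 ns_ge]] in auto)
    thus ?thesis unfolding n1_eq E010_def by (simp add: mult.assoc)
  qed
  have L3: "lind \<Omega> {1..nt*nr*ns} B001"
    unfolding B001_def
  proof (rule lind_vec3[OF nr0])
    show "0 < ns" using ns_ge by simp
    have "lind ({0..R} \<times> {0..S} \<times> {0..T}) ({1..nr} \<times> {1..ns} \<times> {1..nt})
        (\<lambda>(i,j,k) (x,y,z). per_B tr pr mr i x * bspl ts ps j y * per_D tt pt mt k z)"
      by (rule lind3[OF _ _ _ LrB LsB LtD]) simp_all
    thus "lind \<Omega> ({1..nr} \<times> {1..ns} \<times> {1..nt}) (\<lambda>(i, j, k).
       (\<lambda>i j k (r, s, t). per_B tr pr mr i r * bspl ts ps j s * per_D tt pt mt k t) i j k)"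
      unfolding Om by (subst lind_cong) (auto simp: case_prod_beta)
  qed
  have R3: "RowInd n1 (nt*nr*ns) (E001 nr ns)"
  proof -
    have "RowInd (nt * (nbar1 nr ns + nbar0 nr ns)) (nt * (nr * ns))
            (kron (nbar1 nr ns + nbar0 nr ns) (nr * ns) idm (vstack (nbar1 nr ns) zerom (E0 nr)))"
      by (rule RowInd_kron[OF rB0]) (use nr0 ns_ge RowInd_vstack_top[OF RowInd_E0[OF nr3 ns_ge]] in auto)
    thus ?thesis unfolding n1_eq E001_def by (simp add: mult.assoc)
  qed
  show ?thesis using matfun_nzli[OF L1 R1] matfun_nzli[OF L2 R2] matfun_nzli[OF L3 R3] by simp
qed


end
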